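(* Let $\alpha\in(0,1)$, let $\bar w\in\mathcal{F}$ with $R_\alpha(\bar w)<\infty$, $g\in L^2(\Omega)$ and $\Delta\ge0$. Then the problem \[ \min_{w\in L^1(\Omega)}\ (g,w-\bar w)_{L^2}+\eta R_\alpha(w)-\eta R_\alpha(\bar w)\quad\text{s.t. }\|w-\bar w\|_{L^1}\le\Delta,\ w(x)\in W\text{ for a.e. }x\in\Omega \] admits a minimizer.
   Context: Let $d\in\mathbb{N}$, $\Omega\subset\mathbb{R}^d$ a bounded polyhedral domain, $\eta>0$, $W=\{w_1,\dots,w_M\}\subset\mathbb{Z}$ a set of $M$ distinct integers, $\mathcal{F}\coloneqq\{w\in L^1(\Omega):w(x)\in W\text{ a.e.}\}$. For measurable $E\subset\mathbb{R}^d$, $P_\alpha(E)\coloneqq\int_{\mathbb{R}^d}\int_{\mathbb{R}^d}\frac{|\chi_E(x)-\chi_E(y)|}{|x-y|^{d+\alpha}}\,\mathrm{d}x\,\mathrm{d}y\in[0,\infty]$. For $w\in\mathcal{F}$, $E_i\coloneqq w^{-1}(\{w_i\})$ and $R_\alpha(w)\coloneqq(1-\alpha)\sum_{i=1}^M|w_i|P_\alpha(E_i)$. *)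

theory Defs
  imports "HOL-Analysis.Analysis"
begin

definition polyhedral_domain :: "'a::euclidean_space set \<Rightarrow> bool" where
  "polyhedral_domain \<Omega> \<longleftrightarrow> \<Omega> \<noteq> {} \<and> open \<Omega> \<and> connected \<Omega> \<and> bounded \<Omega> \<and>
     (\<exists>\<P>. finite \<P> \<and> (\<forall>P\<in>\<P>. polytope P) \<and> closure \<Omega> = \<Union>\<P>)"

definition frac_perimeter :: "real \<Rightarrow> 'a::euclidean_space set \<Rightarrow> ennreal" where
  "frac_perimeter \<alpha> E =
     (\<integral>\<^sup>+ x. (\<integral>\<^sup>+ y. ennreal (\<bar>indicator E x - indicator E y\<bar> /
          norm (x - y) powr (real DIM('a) + \<alpha>)) \<partial>lebesgue) \<partial>lebesgue)"

definition level_set :: "'a set \<Rightarrow> ('a \<Rightarrow> real) \<Rightarrow> int \<Rightarrow> 'a set" where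
  "level_set \<Omega> w v = {x\<in>\<Omega>. w x = real_of_int v}"

definition R_alpha :: "real \<Rightarrow> int set \<Rightarrow> 'a::euclidean_space set \<Rightarrow> ('a \<Rightarrow> real) \<Rightarrow> ennreal" where
  "R_alpha \<alpha> W \<Omega> w =
     ennreal (1 - \<alpha>) * (\<Sum>v\<in>W. ennreal (real_of_int \<bar>v\<bar>) * frac_perimeter \<alpha> (level_set \<Omega> w v))"

definition in_F :: "int set \<Rightarrow> 'a::euclidean_space set \<Rightarrow> ('a \<Rightarrow> real) \<Rightarrow> bool" where
  "in_F W \<Omega> w \<longleftrightarrow> integrable (lebesgue_on \<Omega>) w \<and>
     (AE x in lebesgue_on \<Omega>. w x \<in> real_of_int ` W)"

definition trust_obj ::
  "real \<Rightarrow> real \<Rightarrow> int set \<Rightarrow> 'a::euclidean_space set \<Rightarrow> ('a \<Rightarrow> real) \<Rightarrow> ('a \<Rightarrow> real)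
     \<Rightarrow> ('a \<Rightarrow> real) \<Rightarrow> ereal" where
  "trust_obj \<eta> \<alpha> W \<Omega> g wbar w =
     ereal (integral\<^sup>L (lebesgue_on \<Omega>) (\<lambda>x. g x * (w x - wbar x)))
     + ereal \<eta> * enn2ereal (R_alpha \<alpha> W \<Omega> w) - ereal \<eta> * enn2ereal (R_alpha \<alpha> W \<Omega> wbar)"

definition trust_feasible ::
  "int set \<Rightarrow> 'a::euclidean_space set \<Rightarrow> real \<Rightarrow> ('a \<Rightarrow> real) \<Rightarrow> ('a \<Rightarrow> real) \<Rightarrow> bool" where
  "trust_feasible W \<Omega> \<Delta> wbar w \<longleftrightarrow> integrable (lebesgue_on \<Omega>) w \<and>
     integral\<^sup>L (lebesgue_on \<Omega>) (\<lambda>x. \<bar>w x - wbar x\<bar>) \<le> \<Delta> \<and>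
     (AE x in lebesgue_on \<Omega>. w x \<in> real_of_int ` W)"

end

theory Submission
  imports Defs "HOL-Analysis.Analysis" "HOL-Library.Diagonal_Subsequence"
begin

lemma cauchy_ae_subseq:
  fixes f :: "nat \<Rightarrow> 'b \<Rightarrow> real"
  assumes meas: "\<And>n. f n \<in> borel_measurable M"
    and cauchy: "\<And>e. e > 0 \<Longrightarrow> \<exists>N. \<forall>i\<ge>N. \<forall>j\<ge>N. (\<integral>\<^sup>+x. ennreal \<bar>f i x - f j x\<bar> \<partial>M) < ennreal e"
  shows "\<exists>r. strict_mono r \<and> (AE x in M. convergent (\<lambda>n. f (r n) x))"
proof -
  have "\<forall>k. \<exists>N. \<forall>i\<ge>N. \<forall>j\<ge>N. (\<integral>\<^sup>+x. ennreal \<bar>f i x - f j x\<bar> \<partial>M) < ennreal ((1/2)^k)"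
    using cauchy by simp
  then obtain N where N: "\<And>k i j. i \<ge> N k \<Longrightarrow> j \<ge> N k \<Longrightarrow> (\<integral>\<^sup>+x. ennreal \<bar>f i x - f j x\<bar> \<partial>M) < ennreal ((1/2)^k)"
    by metis
  define r where "r = rec_nat (N 0) (\<lambda>k rk. max (Suc rk) (N (Suc k)))"
  have r0: "r 0 = N 0" and rS: "\<And>k. r (Suc k) = max (Suc (r k)) (N (Suc k))"
    by (simp_all add: r_def)
  have mono: "strict_mono r"
    unfolding strict_mono_Suc_iff using rS by (simp add: less_max_iff_disj)
  have rN: "N k \<le> r k" for k
    by (cases k) (simp_all add: r0 rS)
  have rle: "r k \<le> r (Suc k)" for k using rS by simp
  define d where "d k x = \<bar>f (r (Suc k)) x - f (r k) x\<bar>" for k x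
  have dint: "(\<integral>\<^sup>+x. ennreal (d k x) \<partial>M) \<le> ennreal ((1/2)^k)" for k
    unfolding d_def using N[of k "r (Suc k)" "r k"] rN[of k] rle[of k] by simp
  have dmeas: "(\<lambda>x. ennreal (d k x)) \<in> borel_measurable M" for k
    unfolding d_def using meas by measurable
  have "(\<integral>\<^sup>+x. (\<Sum>k. ennreal (d k x)) \<partial>M) = (\<Sum>k. \<integral>\<^sup>+x. ennreal (d k x) \<partial>M)"
    by (rule nn_integral_suminf) (rule dmeas)
  also have "\<dots> \<le> (\<Sum>k. ennreal ((1/2)^k))"
    by (intro suminf_le dint) auto
  also have "\<dots> = ennreal (\<Sum>k. (1/2::real)^k)"
    by (rule suminf_ennreal2) auto
  finally have fin: "(\<integral>\<^sup>+x. (\<Sum>k. ennreal (d k x)) \<partial>M) \<noteq> \<infinity>"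
    by (auto simp: top_unique)
  have "AE x in M. (\<Sum>k. ennreal (d k x)) \<noteq> \<infinity>"
    by (rule nn_integral_PInf_AE[OF _ fin]) (use dmeas in measurable)
  then have "AE x in M. convergent (\<lambda>n. f (r n) x)"
  proof (rule AE_mp, intro AE_I2 impI)
    fix x assume "(\<Sum>k. ennreal (d k x)) \<noteq> \<infinity>"
    then have "summable (\<lambda>k. d k x)"
      by (intro summable_suminf_not_top) (auto simp: d_def)
    then have "summable (\<lambda>k. f (r (Suc k)) x - f (r k) x)"
      unfolding d_def by (rule summable_rabs_cancel)
    then have "convergent (\<lambda>n. \<Sum>k<n. f (r (Suc k)) x - f (r k) x)"
      by (simp add: summable_iff_convergent)
    then have "convergent (\<lambda>n. f (r 0) x + (\<Sum>k<n. f (r (Suc k)) x - f (r k) x))"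
      by (intro convergent_add convergent_const)
    moreover have "f (r 0) x + (\<Sum>k<n. f (r (Suc k)) x - f (r k) x) = f (r n) x" for n
      by (induction n) simp_all
    ultimately show "convergent (\<lambda>n. f (r n) x)" by simp
  qed
  with mono show ?thesis by blast
qed

lemma fin_subseq:
  fixes v :: "'i \<Rightarrow> nat \<Rightarrow> real"
  assumes "finite Z" and bnd: "\<And>z n. \<bar>v z n\<bar> \<le> B"
  shows "\<exists>r. strict_mono r \<and> (\<forall>z\<in>Z. convergent (\<lambda>n. v z (r n)))"
  using assms(1)
proof (induction Z rule: finite_induct)
  case empty
  then show ?case by (intro exI[of _ id]) (auto simp: strict_mono_def)
next
  case (insert z F)
  then obtain r where r: "strict_mono r" "\<forall>z\<in>F. convergent (\<lambda>n. v z (r n))" by blast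
  have "bounded (range (\<lambda>n. v z (r n)))"
    using bnd by (intro boundedI[of _ B]) auto
  then obtain l r' where r': "strict_mono r'" "((\<lambda>n. v z (r n)) \<circ> r') \<longlonglongrightarrow> l"
    using bounded_imp_convergent_subsequence by blast
  have "convergent (\<lambda>n. v y ((r \<circ> r') n))" if "y \<in> insert z F" for y
  proof (cases "y = z")
    case True
    then show ?thesis using r' by (auto simp: convergent_def o_def)
  next
    case False
    then have "convergent (\<lambda>n. v y (r n))" using r that by auto
    from convergent_subseq_convergent[OF this r'(1)] show ?thesis by (simp add: o_def)
  qed
  moreover have "strict_mono (r \<circ> r')" using r r' by (simp add: strict_mono_o)
  ultimately show ?case by blast
qed

lemma diag_bounded:
  fixes u :: "nat \<Rightarrow> 'i \<Rightarrow> nat \<Rightarrow> real"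
  assumes fin: "\<And>m. finite (Z m)" and bnd: "\<And>m z n. \<bar>u m z n\<bar> \<le> B"
  shows "\<exists>r. strict_mono r \<and> (\<forall>m. \<forall>z\<in>Z m. convergent (\<lambda>n. u m z (r n)))"
proof -
  define P where "P m s \<longleftrightarrow> (\<forall>z\<in>Z m. convergent (\<lambda>n. u m z (s n)))" for m and s :: "nat \<Rightarrow> nat"
  interpret subseqs P
  proof
    fix m and s :: "nat \<Rightarrow> nat" assume "strict_mono s"
    obtain r where "strict_mono r" "\<forall>z\<in>Z m. convergent (\<lambda>n. u m z (s (r n)))"
      using fin_subseq[of "Z m" "\<lambda>z n. u m z (s n)" B] fin bnd by blast
    then show "\<exists>r'. strict_mono r' \<and> P m (s \<circ> r')" unfolding P_def by (auto simp: o_def)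
  qed
  have stable: "P n (s \<circ> r)" if "strict_mono r" "P n s" for r s n
    using that convergent_subseq_convergent[of "\<lambda>k. u n _ (s k)" r] unfolding P_def by (auto simp: o_def)
  have "convergent (\<lambda>n. u m z (diagseq n))" if "z \<in> Z m" for m z
  proof -
    have "P m (diagseq \<circ> (+) (Suc m))"
      by (rule diagseq_holds) (rule stable)
    then have "convergent (\<lambda>n. u m z (diagseq (n + Suc m)))"
      using that unfolding P_def by (simp add: o_def add.commute)
    then show ?thesis
      unfolding convergent_def using LIMSEQ_offset[of "\<lambda>n. u m z (diagseq n)" "Suc m"] by blast
  qed
  then show ?thesis using subseq_diagseq by blast
qed

lemma sigma_finite_lebesgue: "sigma_finite_measure (lebesgue :: 'a::euclidean_space measure)"
proof -
  obtain A :: "'a set set" where A: "countable A" "A \<subseteq> sets lborel" "\<Union>A = space lborel" "\<forall>a\<in>A. emeasure lborel a \<noteq> \<infinity>"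
    using sigma_finite_measure.sigma_finite_countable[OF sigma_finite_lborel] by blast
  show ?thesis
    unfolding sigma_finite_measure_def
    using A by (intro exI[of _ A]) auto
qed

lemma meas_K:
  fixes f :: "'a::euclidean_space \<Rightarrow> real"
  assumes "f \<in> borel_measurable lebesgue"
  shows "(\<lambda>(x,y). ennreal (\<bar>f x - f y\<bar> / norm (x - y) powr s)) \<in> borel_measurable (lebesgue \<Otimes>\<^sub>M lebesgue)"
proof -
  have id: "(\<lambda>x. x) \<in> (lebesgue :: 'a measure) \<rightarrow>\<^sub>M borel"
    by (simp add: measurable_completion)
  have "(\<lambda>z. fst z - snd z) \<in> borel_measurable (lebesgue \<Otimes>\<^sub>M (lebesgue :: 'a measure))"
    using measurable_compose[OF measurable_fst id] measurable_compose[OF measurable_snd id]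
    by (intro borel_measurable_diff) auto
  then have "(\<lambda>z. norm (fst z - snd z) powr s) \<in> borel_measurable (lebesgue \<Otimes>\<^sub>M (lebesgue :: 'a measure))"
    by measurable
  moreover have "(\<lambda>z. f (fst z)) \<in> borel_measurable (lebesgue \<Otimes>\<^sub>M lebesgue)"
    using measurable_compose[OF measurable_fst assms] .
  moreover have "(\<lambda>z. f (snd z)) \<in> borel_measurable (lebesgue \<Otimes>\<^sub>M lebesgue)"
    using measurable_compose[OF measurable_snd assms] .
  ultimately have "(\<lambda>z. ennreal (\<bar>f (fst z) - f (snd z)\<bar> / norm (fst z - snd z) powr s)) \<in> borel_measurable (lebesgue \<Otimes>\<^sub>M lebesgue)"
    by measurable
  then show ?thesis by (simp add: case_prod_beta')
qed

lemma meas_K_ind: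
  fixes f :: "'a::euclidean_space \<Rightarrow> real"
  assumes "f \<in> borel_measurable lebesgue" "Q \<in> sets lebesgue"
  shows "(\<lambda>x. indicator Q x * (\<integral>\<^sup>+y. indicator Q y * ennreal (\<bar>f x - f y\<bar> / norm (x - y) powr s) \<partial>lebesgue)) \<in> borel_measurable lebesgue"
proof -
  have "(\<lambda>(x,y). indicator Q y * ennreal (\<bar>f x - f y\<bar> / norm (x - y) powr s)) \<in> borel_measurable (lebesgue \<Otimes>\<^sub>M lebesgue)"
  proof -
    have "(\<lambda>z. indicator Q (snd z) :: ennreal) \<in> borel_measurable (lebesgue \<Otimes>\<^sub>M lebesgue)"
      using assms(2) by measurable
    from borel_measurable_times_ennreal[OF this meas_K[OF assms(1), of s, unfolded case_prod_beta']]
    show ?thesis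
      by (simp add: case_prod_beta')
  qed
  from sigma_finite_measure.borel_measurable_nn_integral[OF sigma_finite_lebesgue this]
  show ?thesis using assms(2) by measurable
qed

lemma meas_K_y:
  fixes f :: "'a::euclidean_space \<Rightarrow> real"
  assumes "f \<in> borel_measurable lebesgue"
  shows "(\<lambda>y. ennreal (\<bar>f x - f y\<bar> / norm (x - y) powr s)) \<in> borel_measurable lebesgue"
  using measurable_Pair2[OF meas_K[OF assms, of s], of x] by simp

lemma integrable_ind_bounded:
  fixes g :: "'a \<Rightarrow> real"
  assumes "Q \<in> sets M" "emeasure M Q < \<infinity>" "g \<in> borel_measurable M" "\<And>x. \<bar>g x\<bar> \<le> B"
  shows "integrable M (\<lambda>x. indicator Q x * g x)"
proof (rule Bochner_Integration.integrable_bound[where f="\<lambda>x. B * indicator Q x"])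
  show "integrable M (\<lambda>x. B * indicator Q x)"
    using assms by (intro integrable_mult_right integrable_real_indicator) auto
  show "(\<lambda>x. indicator Q x * g x) \<in> borel_measurable M" using assms by measurable
  show "AE x in M. norm (indicator Q x * g x) \<le> norm (B * indicator Q x)"
    using assms(4) by (intro AE_I2) (auto simp: indicator_def abs_mult intro: order.trans[OF _ abs_ge_self])
qed

lemma cell_est:
  fixes f :: "'a::euclidean_space \<Rightarrow> real" and Q :: "'a set"
  assumes Q: "Q \<in> sets lebesgue" "emeasure lebesgue Q < \<infinity>" and mu: "0 < \<mu>" "\<mu> \<le> measure lebesgue Q"
    and diam: "\<And>x y. x \<in> Q \<Longrightarrow> y \<in> Q \<Longrightarrow> norm (x - y) \<le> \<delta>" and s: "0 \<le> s"
    and fm: "f \<in> borel_measurable lebesgue" and bnd: "\<And>x. \<bar>f x\<bar> \<le> B"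
  shows "(\<integral>\<^sup>+x. indicator Q x * ennreal \<bar>f x - (\<integral>y. indicator Q y * f y \<partial>lebesgue) / measure lebesgue Q\<bar> \<partial>lebesgue)
    \<le> ennreal (\<delta> powr s / \<mu>) * (\<integral>\<^sup>+x. indicator Q x * (\<integral>\<^sup>+y. indicator Q y * ennreal (\<bar>f x - f y\<bar> / norm (x - y) powr s) \<partial>lebesgue) \<partial>lebesgue)"
proof -
  define mQ where "mQ = measure lebesgue Q"
  define avg where "avg = (\<integral>y. indicator Q y * f y \<partial>lebesgue) / mQ"
  define I where "I x = (\<integral>\<^sup>+y. indicator Q y * ennreal (\<bar>f x - f y\<bar> / norm (x - y) powr s) \<partial>lebesgue)" for x
  have mQpos: "mQ > 0" using mu unfolding mQ_def by simp
  have dpos: "0 \<le> \<delta>" if "Q \<noteq> {}" using diam that by (metis all_not_in_conv norm_ge_zero order.trans)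
  have pw: "indicator Q x * ennreal \<bar>f x - avg\<bar> \<le> ennreal (\<delta> powr s / \<mu>) * (indicator Q x * I x)" for x
  proof (cases "x \<in> Q")
    case False then show ?thesis by simp
  next
    case xQ: True
    have int1: "integrable lebesgue (\<lambda>y. indicator Q y * f y)"
      using integrable_ind_bounded[OF Q fm bnd] .
    have int2: "integrable lebesgue (\<lambda>y. indicator Q y * \<bar>f x - f y\<bar>)"
      by (rule integrable_ind_bounded[OF Q, where B="\<bar>f x\<bar> + B"]) (use fm bnd in \<open>auto intro: order.trans[OF abs_triangle_ineq4]\<close>)
    have int3: "integrable lebesgue (\<lambda>y. indicator Q y * (f x - f y))"
      by (rule integrable_ind_bounded[OF Q, where B="\<bar>f x\<bar> + B"]) (use fm bnd in \<open>auto intro: order.trans[OF abs_triangle_ineq4]\<close>)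
    have "(\<integral>y. indicator Q y * (f x - f y) \<partial>lebesgue) = (\<integral>y. f x * indicator Q y - indicator Q y * f y \<partial>lebesgue)"
      by (simp add: algebra_simps)
    also have "\<dots> = (\<integral>y. f x * indicator Q y \<partial>lebesgue) - (\<integral>y. indicator Q y * f y \<partial>lebesgue)"
      using int1 Q
      by (intro Bochner_Integration.integral_diff) (auto intro!: integrable_mult_right integrable_real_indicator)
    also have "\<dots> = f x * mQ - (\<integral>y. indicator Q y * f y \<partial>lebesgue)"
      unfolding mQ_def integral_mult_right_zero integral_indicator by simp
    finally have eq: "f x - avg = (\<integral>y. indicator Q y * (f x - f y) \<partial>lebesgue) / mQ"
      using mQpos unfolding avg_def by (simp add: field_simps)
    have "\<bar>f x - avg\<bar> \<le> (\<integral>y. \<bar>indicator Q y * (f x - f y)\<bar> \<partial>lebesgue) / mQ"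
      unfolding eq using mQpos by (simp add: abs_divide divide_right_mono integral_abs_bound)
    also have "\<dots> = (\<integral>y. indicator Q y * \<bar>f x - f y\<bar> \<partial>lebesgue) / mQ"
      by (simp add: abs_mult)
    finally have le1: "ennreal \<bar>f x - avg\<bar> \<le> ennreal (1 / mQ) * ennreal (\<integral>y. indicator Q y * \<bar>f x - f y\<bar> \<partial>lebesgue)"
      using mQpos by (subst ennreal_mult[symmetric]) (auto intro: integral_nonneg_AE)
    have "ennreal (\<integral>y. indicator Q y * \<bar>f x - f y\<bar> \<partial>lebesgue) = (\<integral>\<^sup>+y. ennreal (indicator Q y * \<bar>f x - f y\<bar>) \<partial>lebesgue)"
      using int2 by (subst nn_integral_eq_integral) auto
    also have "\<dots> \<le> (\<integral>\<^sup>+y. ennreal (\<delta> powr s) * (indicator Q y * ennreal (\<bar>f x - f y\<bar> / norm (x - y) powr s)) \<partial>lebesgue)"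
    proof (intro nn_integral_mono)
      fix y
      show "ennreal (indicator Q y * \<bar>f x - f y\<bar>) \<le> ennreal (\<delta> powr s) * (indicator Q y * ennreal (\<bar>f x - f y\<bar> / norm (x - y) powr s))"
      proof (cases "y \<in> Q \<and> y \<noteq> x")
        case False then show ?thesis by (auto simp: indicator_def)
      next
        case True
        then have np: "norm (x - y) > 0" by auto
        have "norm (x - y) powr s \<le> \<delta> powr s"
          using diam[OF xQ] True by (intro powr_mono2 s) auto
        then have "\<bar>f x - f y\<bar> \<le> \<delta> powr s * (\<bar>f x - f y\<bar> / norm (x - y) powr s)"
          using np by (simp add: field_simps) (metis mult.commute mult_left_mono abs_ge_zero)
        then show ?thesis using True by (simp add: ennreal_mult[symmetric] ennreal_leI)
      qed
    qed
    also have "\<dots> = ennreal (\<delta> powr s) * I x"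
      unfolding I_def by (rule nn_integral_cmult) (use Q meas_K_y[OF fm] in measurable)
    finally have le2: "ennreal (\<integral>y. indicator Q y * \<bar>f x - f y\<bar> \<partial>lebesgue) \<le> ennreal (\<delta> powr s) * I x" .
    have le3: "ennreal (1 / mQ) * ennreal (\<delta> powr s) \<le> ennreal (\<delta> powr s / \<mu>)"
      using mQpos mu unfolding mQ_def
      by (subst ennreal_mult[symmetric]) (auto intro!: ennreal_leI divide_left_mono)
    have "ennreal \<bar>f x - avg\<bar> \<le> ennreal (1 / mQ) * (ennreal (\<delta> powr s) * I x)"
      using le1 le2 by (meson dual_order.trans mult_left_mono zero_le)
    also have "\<dots> \<le> ennreal (\<delta> powr s / \<mu>) * I x"
      using le3 by (simp add: mult.assoc[symmetric] mult_right_mono)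
    finally show ?thesis using xQ by simp
  qed
  have "(\<integral>\<^sup>+x. indicator Q x * ennreal \<bar>f x - avg\<bar> \<partial>lebesgue) \<le> (\<integral>\<^sup>+x. ennreal (\<delta> powr s / \<mu>) * (indicator Q x * I x) \<partial>lebesgue)"
    by (intro nn_integral_mono pw)
  also have "\<dots> = ennreal (\<delta> powr s / \<mu>) * (\<integral>\<^sup>+x. indicator Q x * I x \<partial>lebesgue)"
    unfolding I_def by (rule nn_integral_cmult) (rule meas_K_ind[OF fm Q(1)])
  finally show ?thesis unfolding avg_def mQ_def I_def .
qed

lemma sum_ind_unique:
  fixes F :: "'i \<Rightarrow> ennreal"
  assumes "finite Z" "z0 \<in> Z" "x \<in> Q z0" "\<And>z. z \<in> Z \<Longrightarrow> x \<in> Q z \<Longrightarrow> z = z0"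
  shows "(\<Sum>z\<in>Z. indicator (Q z) x * F z) = F z0"
proof -
  have "(\<Sum>z\<in>Z. indicator (Q z) x * F z) = (\<Sum>z\<in>Z. if z = z0 then F z0 else 0)"
  proof (rule sum.cong[OF refl])
    fix z assume z: "z \<in> Z"
    show "indicator (Q z) x * F z = (if z = z0 then F z0 else 0)"
    proof (cases "z = z0")
      case True then show ?thesis using assms(3) by simp
    next
      case False
      then have "x \<notin> Q z" using assms(4)[OF z] by blast
      then show ?thesis using False by simp
    qed
  qed
  then show ?thesis using assms(1,2) by simp
qed

lemma sum_ind_none:
  fixes F :: "'i \<Rightarrow> ennreal"
  assumes "\<And>z. z \<in> Z \<Longrightarrow> x \<notin> Q z"
  shows "(\<Sum>z\<in>Z. indicator (Q z) x * F z) = 0"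
  by (rule sum.neutral) (simp add: assms)


lemma cells_J:
  fixes g :: "'a::euclidean_space \<Rightarrow> real"
  assumes gm: "g \<in> borel_measurable lebesgue" and fin: "finite Z"
    and Qs: "\<And>z. z \<in> Z \<Longrightarrow> Q z \<in> sets lebesgue"
    and disj: "\<And>z z' x. z \<in> Z \<Longrightarrow> z' \<in> Z \<Longrightarrow> x \<in> Q z \<Longrightarrow> x \<in> Q z' \<Longrightarrow> z = z'"
  shows "(\<Sum>z\<in>Z. \<integral>\<^sup>+x. indicator (Q z) x * (\<integral>\<^sup>+y. indicator (Q z) y * ennreal (\<bar>g x - g y\<bar> / norm (x - y) powr s) \<partial>lebesgue) \<partial>lebesgue)
     \<le> (\<integral>\<^sup>+x. (\<integral>\<^sup>+y. ennreal (\<bar>g x - g y\<bar> / norm (x - y) powr s) \<partial>lebesgue) \<partial>lebesgue)"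
proof -
  have "(\<Sum>z\<in>Z. \<integral>\<^sup>+x. indicator (Q z) x * (\<integral>\<^sup>+y. indicator (Q z) y * ennreal (\<bar>g x - g y\<bar> / norm (x - y) powr s) \<partial>lebesgue) \<partial>lebesgue)
     = (\<integral>\<^sup>+x. (\<Sum>z\<in>Z. indicator (Q z) x * (\<integral>\<^sup>+y. indicator (Q z) y * ennreal (\<bar>g x - g y\<bar> / norm (x - y) powr s) \<partial>lebesgue)) \<partial>lebesgue)"
    by (rule nn_integral_sum[symmetric]) (rule meas_K_ind[OF gm Qs])
  also have "\<dots> \<le> (\<integral>\<^sup>+x. (\<integral>\<^sup>+y. ennreal (\<bar>g x - g y\<bar> / norm (x - y) powr s) \<partial>lebesgue) \<partial>lebesgue)"
  proof (intro nn_integral_mono)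
    fix x
    show "(\<Sum>z\<in>Z. indicator (Q z) x * (\<integral>\<^sup>+y. indicator (Q z) y * ennreal (\<bar>g x - g y\<bar> / norm (x - y) powr s) \<partial>lebesgue))
      \<le> (\<integral>\<^sup>+y. ennreal (\<bar>g x - g y\<bar> / norm (x - y) powr s) \<partial>lebesgue)"
    proof (cases "\<exists>z0\<in>Z. x \<in> Q z0")
      case True
      then obtain z0 where z0: "z0 \<in> Z" "x \<in> Q z0" by blast
      have "(\<Sum>z\<in>Z. indicator (Q z) x * (\<integral>\<^sup>+y. indicator (Q z) y * ennreal (\<bar>g x - g y\<bar> / norm (x - y) powr s) \<partial>lebesgue))
          = (\<integral>\<^sup>+y. indicator (Q z0) y * ennreal (\<bar>g x - g y\<bar> / norm (x - y) powr s) \<partial>lebesgue)"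
        using disj z0 by (intro sum_ind_unique[of Z z0 x Q, OF fin z0]) auto
      also have "\<dots> \<le> (\<integral>\<^sup>+y. ennreal (\<bar>g x - g y\<bar> / norm (x - y) powr s) \<partial>lebesgue)"
        by (intro nn_integral_mono) (auto simp: indicator_def)
      finally show ?thesis .
    next
      case False
      then show ?thesis by (subst sum_ind_none) auto
    qed
  qed
  finally show ?thesis .
qed

lemma two_fn_est:
  fixes g1 g2 :: "'a::euclidean_space \<Rightarrow> real" and Q :: "'i \<Rightarrow> 'a set"
  assumes g1m: "g1 \<in> borel_measurable lebesgue" and g2m: "g2 \<in> borel_measurable lebesgue"
    and b1: "\<And>x. \<bar>g1 x\<bar> \<le> B" and b2: "\<And>x. \<bar>g2 x\<bar> \<le> B"
    and J1: "(\<integral>\<^sup>+x. (\<integral>\<^sup>+y. ennreal (\<bar>g1 x - g1 y\<bar> / norm (x - y) powr s) \<partial>lebesgue) \<partial>lebesgue) \<le> ennreal C"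
    and J2: "(\<integral>\<^sup>+x. (\<integral>\<^sup>+y. ennreal (\<bar>g2 x - g2 y\<bar> / norm (x - y) powr s) \<partial>lebesgue) \<partial>lebesgue) \<le> ennreal C"
    and s: "0 \<le> s" and fin: "finite Z"
    and Qs: "\<And>z. z \<in> Z \<Longrightarrow> Q z \<in> sets lebesgue"
    and Qf: "\<And>z. z \<in> Z \<Longrightarrow> emeasure lebesgue (Q z) < \<infinity>"
    and Qmu: "\<And>z. z \<in> Z \<Longrightarrow> \<mu> \<le> measure lebesgue (Q z)" and mupos: "0 < \<mu>"
    and Qd: "\<And>z x y. z \<in> Z \<Longrightarrow> x \<in> Q z \<Longrightarrow> y \<in> Q z \<Longrightarrow> norm (x - y) \<le> \<delta>"
    and disj: "\<And>z z' x. z \<in> Z \<Longrightarrow> z' \<in> Z \<Longrightarrow> x \<in> Q z \<Longrightarrow> x \<in> Q z' \<Longrightarrow> z = z'"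
    and cover1: "\<And>x. g1 x \<noteq> 0 \<Longrightarrow> \<exists>z\<in>Z. x \<in> Q z"
    and cover2: "\<And>x. g2 x \<noteq> 0 \<Longrightarrow> \<exists>z\<in>Z. x \<in> Q z"
  shows "(\<integral>\<^sup>+x. ennreal \<bar>g1 x - g2 x\<bar> \<partial>lebesgue)
    \<le> ennreal (\<delta> powr s / \<mu>) * ennreal C
      + ennreal (\<Sum>z\<in>Z. measure lebesgue (Q z) *
          \<bar>(\<integral>y. indicator (Q z) y * g1 y \<partial>lebesgue) / measure lebesgue (Q z) - (\<integral>y. indicator (Q z) y * g2 y \<partial>lebesgue) / measure lebesgue (Q z)\<bar>)
      + ennreal (\<delta> powr s / \<mu>) * ennreal C"
proof -
  define a1 where "a1 z = (\<integral>y. indicator (Q z) y * g1 y \<partial>lebesgue) / measure lebesgue (Q z)" for z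
  define a2 where "a2 z = (\<integral>y. indicator (Q z) y * g2 y \<partial>lebesgue) / measure lebesgue (Q z)" for z
  define c where "c = \<delta> powr s / \<mu>"
  define T1 where "T1 z = (\<integral>\<^sup>+x. indicator (Q z) x * ennreal \<bar>g1 x - a1 z\<bar> \<partial>lebesgue)" for z
  define T2 where "T2 z = (\<integral>\<^sup>+x. indicator (Q z) x * ennreal \<bar>g2 x - a2 z\<bar> \<partial>lebesgue)" for z
  have pw: "ennreal \<bar>g1 x - g2 x\<bar> = (\<Sum>z\<in>Z. indicator (Q z) x * ennreal \<bar>g1 x - g2 x\<bar>)" for x
  proof (cases "g1 x = 0 \<and> g2 x = 0")
    case True then show ?thesis by simp
  next
    case False
    then obtain z0 where "z0 \<in> Z" "x \<in> Q z0" using cover1 cover2 by blast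
    then show ?thesis using disj by (subst sum_ind_unique[of Z z0 x Q, OF fin]) auto
  qed
  have "(\<integral>\<^sup>+x. ennreal \<bar>g1 x - g2 x\<bar> \<partial>lebesgue) = (\<integral>\<^sup>+x. (\<Sum>z\<in>Z. indicator (Q z) x * ennreal \<bar>g1 x - g2 x\<bar>) \<partial>lebesgue)"
    by (intro nn_integral_cong) (rule pw)
  also have "\<dots> = (\<Sum>z\<in>Z. \<integral>\<^sup>+x. indicator (Q z) x * ennreal \<bar>g1 x - g2 x\<bar> \<partial>lebesgue)"
    by (rule nn_integral_sum) (use Qs g1m g2m in measurable)
  also have "\<dots> \<le> (\<Sum>z\<in>Z. T1 z + ennreal (measure lebesgue (Q z) * \<bar>a1 z - a2 z\<bar>) + T2 z)"
  proof (intro sum_mono)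
    fix z assume z: "z \<in> Z"
    have "(\<integral>\<^sup>+x. indicator (Q z) x * ennreal \<bar>g1 x - g2 x\<bar> \<partial>lebesgue)
       \<le> (\<integral>\<^sup>+x. (indicator (Q z) x * ennreal \<bar>g1 x - a1 z\<bar> + ennreal \<bar>a1 z - a2 z\<bar> * indicator (Q z) x) + indicator (Q z) x * ennreal \<bar>g2 x - a2 z\<bar> \<partial>lebesgue)"
    proof (intro nn_integral_mono)
      fix x
      have "\<bar>g1 x - g2 x\<bar> \<le> \<bar>g1 x - a1 z\<bar> + \<bar>a1 z - a2 z\<bar> + \<bar>g2 x - a2 z\<bar>" by linarith
      then have "ennreal \<bar>g1 x - g2 x\<bar> \<le> ennreal \<bar>g1 x - a1 z\<bar> + ennreal \<bar>a1 z - a2 z\<bar> + ennreal \<bar>g2 x - a2 z\<bar>"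
        by (simp add: ennreal_plus[symmetric] del: ennreal_plus)
      then show "indicator (Q z) x * ennreal \<bar>g1 x - g2 x\<bar> \<le> (indicator (Q z) x * ennreal \<bar>g1 x - a1 z\<bar> + ennreal \<bar>a1 z - a2 z\<bar> * indicator (Q z) x) + indicator (Q z) x * ennreal \<bar>g2 x - a2 z\<bar>"
        by (auto simp: indicator_def)
    qed
    also have "\<dots> = T1 z + ennreal (measure lebesgue (Q z) * \<bar>a1 z - a2 z\<bar>) + T2 z"
    proof -
      have "(\<integral>\<^sup>+x. ennreal \<bar>a1 z - a2 z\<bar> * indicator (Q z) x \<partial>lebesgue) = ennreal \<bar>a1 z - a2 z\<bar> * emeasure lebesgue (Q z)"
        by (rule nn_integral_cmult_indicator[OF Qs[OF z]])
      also have "\<dots> = ennreal \<bar>a1 z - a2 z\<bar> * ennreal (measure lebesgue (Q z))"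
        using Qf[OF z] by (simp add: emeasure_eq_ennreal_measure less_top)
      also have "\<dots> = ennreal (measure lebesgue (Q z) * \<bar>a1 z - a2 z\<bar>)"
        by (simp add: ennreal_mult'' mult.commute)
      finally have D: "(\<integral>\<^sup>+x. ennreal \<bar>a1 z - a2 z\<bar> * indicator (Q z) x \<partial>lebesgue) = ennreal (measure lebesgue (Q z) * \<bar>a1 z - a2 z\<bar>)" .
      have m1: "(\<lambda>x. indicator (Q z) x * ennreal \<bar>g1 x - a1 z\<bar>) \<in> borel_measurable lebesgue"
        using Qs[OF z] g1m by measurable
      have m2: "(\<lambda>x. ennreal \<bar>a1 z - a2 z\<bar> * indicator (Q z) x) \<in> borel_measurable lebesgue"
        using Qs[OF z] by measurable
      have m3: "(\<lambda>x. indicator (Q z) x * ennreal \<bar>g2 x - a2 z\<bar>) \<in> borel_measurable lebesgue"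
        using Qs[OF z] g2m by measurable
      have "(\<integral>\<^sup>+x. (indicator (Q z) x * ennreal \<bar>g1 x - a1 z\<bar> + ennreal \<bar>a1 z - a2 z\<bar> * indicator (Q z) x) + indicator (Q z) x * ennreal \<bar>g2 x - a2 z\<bar> \<partial>lebesgue)
         = (\<integral>\<^sup>+x. (indicator (Q z) x * ennreal \<bar>g1 x - a1 z\<bar> + ennreal \<bar>a1 z - a2 z\<bar> * indicator (Q z) x) \<partial>lebesgue) + (\<integral>\<^sup>+x. indicator (Q z) x * ennreal \<bar>g2 x - a2 z\<bar> \<partial>lebesgue)"
        by (rule nn_integral_add[OF borel_measurable_add[OF m1 m2] m3])
      also have "(\<integral>\<^sup>+x. (indicator (Q z) x * ennreal \<bar>g1 x - a1 z\<bar> + ennreal \<bar>a1 z - a2 z\<bar> * indicator (Q z) x) \<partial>lebesgue)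
         = T1 z + (\<integral>\<^sup>+x. ennreal \<bar>a1 z - a2 z\<bar> * indicator (Q z) x \<partial>lebesgue)"
        unfolding T1_def by (rule nn_integral_add[OF m1 m2])
      finally show ?thesis unfolding D T2_def .
    qed
    finally show "(\<integral>\<^sup>+x. indicator (Q z) x * ennreal \<bar>g1 x - g2 x\<bar> \<partial>lebesgue) \<le> T1 z + ennreal (measure lebesgue (Q z) * \<bar>a1 z - a2 z\<bar>) + T2 z" .
  qed
  also have "\<dots> = (\<Sum>z\<in>Z. T1 z) + ennreal (\<Sum>z\<in>Z. measure lebesgue (Q z) * \<bar>a1 z - a2 z\<bar>) + (\<Sum>z\<in>Z. T2 z)"
    by (simp add: sum.distrib del: ennreal_plus)
  also have "\<dots> \<le> ennreal c * ennreal C + ennreal (\<Sum>z\<in>Z. measure lebesgue (Q z) * \<bar>a1 z - a2 z\<bar>) + ennreal c * ennreal C"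
  proof (intro add_mono order.refl)
    have "(\<Sum>z\<in>Z. T1 z) \<le> (\<Sum>z\<in>Z. ennreal c * (\<integral>\<^sup>+x. indicator (Q z) x * (\<integral>\<^sup>+y. indicator (Q z) y * ennreal (\<bar>g1 x - g1 y\<bar> / norm (x - y) powr s) \<partial>lebesgue) \<partial>lebesgue))"
      unfolding T1_def a1_def c_def
      by (intro sum_mono cell_est[OF Qs Qf mupos Qmu _ s g1m b1]) (auto intro: Qd)
    also have "\<dots> \<le> ennreal c * ennreal C"
      unfolding sum_distrib_left[symmetric]
      by (intro mult_left_mono order.trans[OF cells_J[OF g1m fin Qs disj] J1]) auto
    finally show "(\<Sum>z\<in>Z. T1 z) \<le> ennreal c * ennreal C" .
    have "(\<Sum>z\<in>Z. T2 z) \<le> (\<Sum>z\<in>Z. ennreal c * (\<integral>\<^sup>+x. indicator (Q z) x * (\<integral>\<^sup>+y. indicator (Q z) y * ennreal (\<bar>g2 x - g2 y\<bar> / norm (x - y) powr s) \<partial>lebesgue) \<partial>lebesgue))"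
      unfolding T2_def a2_def c_def
      by (intro sum_mono cell_est[OF Qs Qf mupos Qmu _ s g2m b2]) (auto intro: Qd)
    also have "\<dots> \<le> ennreal c * ennreal C"
      unfolding sum_distrib_left[symmetric]
      by (intro mult_left_mono order.trans[OF cells_J[OF g2m fin Qs disj] J2]) auto
    finally show "(\<Sum>z\<in>Z. T2 z) \<le> ennreal c * ennreal C" .
  qed
  finally show ?thesis unfolding a1_def a2_def c_def .
qed

lemma compact_abstract:
  fixes f :: "nat \<Rightarrow> 'a::euclidean_space \<Rightarrow> real" and Z :: "nat \<Rightarrow> 'i set" and Qc :: "nat \<Rightarrow> 'i \<Rightarrow> 'a set"
  assumes fm: "\<And>n. f n \<in> borel_measurable lebesgue" and bnd: "\<And>n x. \<bar>f n x\<bar> \<le> B"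
    and J: "\<And>n. (\<integral>\<^sup>+x. (\<integral>\<^sup>+y. ennreal (\<bar>f n x - f n y\<bar> / norm (x - y) powr s) \<partial>lebesgue) \<partial>lebesgue) \<le> ennreal C"
    and s: "0 \<le> s" and finZ: "\<And>m. finite (Z m)"
    and Qs: "\<And>m z. z \<in> Z m \<Longrightarrow> Qc m z \<in> sets lebesgue"
    and Qf: "\<And>m z. z \<in> Z m \<Longrightarrow> emeasure lebesgue (Qc m z) < \<infinity>"
    and Qmu: "\<And>m z. z \<in> Z m \<Longrightarrow> \<mu> m \<le> measure lebesgue (Qc m z)"
    and mupos: "\<And>m. 0 < \<mu> m"
    and Qd: "\<And>m z x y. z \<in> Z m \<Longrightarrow> x \<in> Qc m z \<Longrightarrow> y \<in> Qc m z \<Longrightarrow> norm (x - y) \<le> \<delta> m"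
    and disj: "\<And>m z z' x. z \<in> Z m \<Longrightarrow> z' \<in> Z m \<Longrightarrow> x \<in> Qc m z \<Longrightarrow> x \<in> Qc m z' \<Longrightarrow> z = z'"
    and cover: "\<And>m n x. f n x \<noteq> 0 \<Longrightarrow> \<exists>z\<in>Z m. x \<in> Qc m z"
    and small: "(\<lambda>m. \<delta> m powr s / \<mu> m) \<longlonglongrightarrow> 0"
  shows "\<exists>r. strict_mono r \<and> (AE x in lebesgue. convergent (\<lambda>n. f (r n) x))"
proof -
  define A where "A m z n = (if z \<in> Z m then (\<integral>y. indicator (Qc m z) y * f n y \<partial>lebesgue) / measure lebesgue (Qc m z) else 0)" for m z n
  have Abnd: "\<bar>A m z n\<bar> \<le> \<bar>B\<bar>" for m z n
  proof (cases "z \<in> Z m")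
    case True
    define M where "M = measure lebesgue (Qc m z)"
    have Mpos: "M > 0" using Qmu[OF True] mupos[of m] unfolding M_def by linarith
    have "\<bar>\<integral>y. indicator (Qc m z) y * f n y \<partial>lebesgue\<bar> \<le> (\<integral>y. \<bar>B\<bar> * indicator (Qc m z) y \<partial>lebesgue)"
    proof (rule integral_abs_bound_integral)
      show "integrable lebesgue (\<lambda>y. indicator (Qc m z) y * f n y)"
        by (rule integrable_ind_bounded[OF Qs[OF True] Qf[OF True] fm bnd])
      show "integrable lebesgue (\<lambda>y. \<bar>B\<bar> * indicator (Qc m z) y)"
        using Qs[OF True] Qf[OF True] by (intro integrable_mult_right integrable_real_indicator) auto
      fix y show "\<bar>indicator (Qc m z) y * f n y\<bar> \<le> \<bar>B\<bar> * indicator (Qc m z) y"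
        using bnd[of n y] by (auto simp: indicator_def)
    qed
    also have "\<dots> = \<bar>B\<bar> * M"
      unfolding M_def integral_mult_right_zero integral_indicator by simp
    finally show ?thesis
      using True Mpos unfolding A_def M_def[symmetric] by (simp add: abs_divide divide_le_eq)
  qed (simp add: A_def)
  obtain r where r: "strict_mono r" "\<And>m z. z \<in> Z m \<Longrightarrow> convergent (\<lambda>n. A m z (r n))"
    using diag_bounded[of Z A "\<bar>B\<bar>", OF finZ Abnd] by blast
  have "\<exists>r'. strict_mono r' \<and> (AE x in lebesgue. convergent (\<lambda>n. f (r (r' n)) x))"
  proof (rule cauchy_ae_subseq[where f="\<lambda>n. f (r n)"])
    show "\<And>n. f (r n) \<in> borel_measurable lebesgue" by (rule fm)
    fix e :: real assume e: "e > 0"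
    define C' where "C' = max C 0"
    have C'0: "C' \<ge> 0" unfolding C'_def by simp
    have J': "(\<integral>\<^sup>+x. (\<integral>\<^sup>+y. ennreal (\<bar>f n x - f n y\<bar> / norm (x - y) powr s) \<partial>lebesgue) \<partial>lebesgue) \<le> ennreal C'" for n
      using J[of n] unfolding C'_def by (meson ennreal_leI max.cobounded1 order.trans)
    obtain m where m: "\<bar>\<delta> m powr s / \<mu> m\<bar> < e / (4 * (C' + 1))"
      using LIMSEQ_D[OF small, of "e / (4 * (C' + 1))"] e C'0 by force
    define c where "c = \<delta> m powr s / \<mu> m"
    have c0: "c \<ge> 0" unfolding c_def using mupos[of m] by simp
    have cC: "c * C' < e / 4"
    proof -
      have "c * C' \<le> e / (4 * (C' + 1)) * C'"
        using m c0 C'0 mupos[of m] unfolding c_def by (intro mult_right_mono) auto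
      also have "\<dots> < e / 4"
        using e C'0 by (simp add: field_simps)
      finally show ?thesis .
    qed
    define S where "S = (\<Sum>z\<in>Z m. measure lebesgue (Qc m z))"
    have S0: "S \<ge> 0" unfolding S_def by (simp add: sum_nonneg)
    define \<epsilon> where "\<epsilon> = e / (4 * (S + 1))"
    have \<epsilon>0: "\<epsilon> > 0" unfolding \<epsilon>_def using e S0 by simp
    have "\<forall>z\<in>Z m. \<exists>L. (\<lambda>n. A m z (r n)) \<longlonglongrightarrow> L"
      using r(2) unfolding convergent_def by blast
    then obtain L where L: "\<And>z. z \<in> Z m \<Longrightarrow> (\<lambda>n. A m z (r n)) \<longlonglongrightarrow> L z" by metis
    have "eventually (\<lambda>n. \<forall>z\<in>Z m. \<bar>A m z (r n) - L z\<bar> < \<epsilon>) sequentially"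
    proof (rule eventually_ball_finite[OF finZ], intro ballI)
      fix z assume "z \<in> Z m"
      from L[OF this] \<epsilon>0 show "eventually (\<lambda>n. \<bar>A m z (r n) - L z\<bar> < \<epsilon>) sequentially"
        unfolding tendsto_iff dist_real_def by blast
    qed
    then obtain N where N: "\<And>n z. n \<ge> N \<Longrightarrow> z \<in> Z m \<Longrightarrow> \<bar>A m z (r n) - L z\<bar> < \<epsilon>"
      unfolding eventually_sequentially by blast
    show "\<exists>N. \<forall>i\<ge>N. \<forall>j\<ge>N. (\<integral>\<^sup>+x. ennreal \<bar>f (r i) x - f (r j) x\<bar> \<partial>lebesgue) < ennreal e"
    proof (intro exI[of _ N] allI impI)
      fix i j assume i: "i \<ge> N" and j: "j \<ge> N"
      have est: "(\<integral>\<^sup>+x. ennreal \<bar>f (r i) x - f (r j) x\<bar> \<partial>lebesgue)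
        \<le> ennreal c * ennreal C'
          + ennreal (\<Sum>z\<in>Z m. measure lebesgue (Qc m z) *
              \<bar>(\<integral>y. indicator (Qc m z) y * f (r i) y \<partial>lebesgue) / measure lebesgue (Qc m z) - (\<integral>y. indicator (Qc m z) y * f (r j) y \<partial>lebesgue) / measure lebesgue (Qc m z)\<bar>)
          + ennreal c * ennreal C'"
        unfolding c_def
        by (rule two_fn_est[OF fm fm bnd bnd J' J' s finZ Qs Qf Qmu mupos Qd disj cover cover])
      have "(\<Sum>z\<in>Z m. measure lebesgue (Qc m z) *
              \<bar>(\<integral>y. indicator (Qc m z) y * f (r i) y \<partial>lebesgue) / measure lebesgue (Qc m z) - (\<integral>y. indicator (Qc m z) y * f (r j) y \<partial>lebesgue) / measure lebesgue (Qc m z)\<bar>)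
          = (\<Sum>z\<in>Z m. measure lebesgue (Qc m z) * \<bar>A m z (r i) - A m z (r j)\<bar>)"
        by (intro sum.cong refl) (simp add: A_def)
      also have "\<dots> \<le> (\<Sum>z\<in>Z m. measure lebesgue (Qc m z) * (2 * \<epsilon>))"
      proof (intro sum_mono mult_left_mono)
        fix z assume z: "z \<in> Z m"
        show "\<bar>A m z (r i) - A m z (r j)\<bar> \<le> 2 * \<epsilon>"
          using N[OF i z] N[OF j z] by linarith
      qed simp
      also have "\<dots> = 2 * \<epsilon> * S"
        unfolding S_def by (simp add: sum_distrib_left mult.commute)
      also have "\<dots> < e / 2"
        unfolding \<epsilon>_def using e S0 by (simp add: field_simps)
      finally have sumlt: "(\<Sum>z\<in>Z m. measure lebesgue (Qc m z) *
              \<bar>(\<integral>y. indicator (Qc m z) y * f (r i) y \<partial>lebesgue) / measure lebesgue (Qc m z) - (\<integral>y. indicator (Qc m z) y * f (r j) y \<partial>lebesgue) / measure lebesgue (Qc m z)\<bar>) < e / 2" .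
      define X where "X = (\<Sum>z\<in>Z m. measure lebesgue (Qc m z) *
              \<bar>(\<integral>y. indicator (Qc m z) y * f (r i) y \<partial>lebesgue) / measure lebesgue (Qc m z) - (\<integral>y. indicator (Qc m z) y * f (r j) y \<partial>lebesgue) / measure lebesgue (Qc m z)\<bar>)"
      have X0: "X \<ge> 0" unfolding X_def by (intro sum_nonneg mult_nonneg_nonneg) auto
      have "ennreal c * ennreal C' + ennreal X + ennreal c * ennreal C' = ennreal (c * C' + X + c * C')"
      proof -
        have e1: "ennreal c * ennreal C' = ennreal (c * C')" using C'0 by (simp add: ennreal_mult'')
        have "c * C' \<ge> 0" using c0 C'0 by simp
        then show ?thesis unfolding e1 using X0 by (simp only: ennreal_plus[symmetric] add_nonneg_nonneg)
      qed
      also have "\<dots> < ennreal e"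
        using cC sumlt c0 C'0 X0 e unfolding X_def[symmetric] by (intro ennreal_lessI) (auto simp: mult.commute)
      finally show "(\<integral>\<^sup>+x. ennreal \<bar>f (r i) x - f (r j) x\<bar> \<partial>lebesgue) < ennreal e"
        using est unfolding X_def[symmetric] by (rule order.strict_trans1[rotated])
    qed
  qed
  then obtain r' where r': "strict_mono r'" "AE x in lebesgue. convergent (\<lambda>n. f (r (r' n)) x)" by blast
  show ?thesis
    using r' r(1) by (intro exI[of _ "r \<circ> r'"]) (auto simp: strict_mono_o)
qed

definition gcell :: "nat \<Rightarrow> ('a::euclidean_space \<Rightarrow> int) \<Rightarrow> 'a set" where
  "gcell m z = {x. \<forall>b\<in>Basis. \<lfloor>real (Suc m) * (x \<bullet> b)\<rfloor> = z b}"

lemma gcell_borel: "gcell m z \<in> sets (borel :: 'a::euclidean_space measure)"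
proof -
  have "gcell m z = (\<Inter>b\<in>Basis. {x. \<lfloor>real (Suc m) * (x \<bullet> b)\<rfloor> = z b})"
    unfolding gcell_def by auto
  also have "\<dots> \<in> sets borel"
    by (intro sets.finite_INT) (auto intro!: pred_intros_logic measurable_cong)
  finally show ?thesis .
qed

lemma gcell_lebesgue: "gcell m z \<in> sets (lebesgue :: 'a::euclidean_space measure)"
  using gcell_borel[of m z] by (simp add: sets_completionI_sets)

lemma gcell_box:
  fixes z :: "'a::euclidean_space \<Rightarrow> int" and m :: nat
  defines "l \<equiv> (\<Sum>b\<in>Basis. (real_of_int (z b) / real (Suc m)) *\<^sub>R b :: 'a)"
    and "u \<equiv> (\<Sum>b\<in>Basis. ((real_of_int (z b) + 1) / real (Suc m)) *\<^sub>R b :: 'a)"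
  shows "box l u \<subseteq> gcell m z" "gcell m z \<subseteq> cbox l u"
proof -
  let ?k = "real (Suc m)"
  have lb: "l \<bullet> b = z b / ?k" if "b \<in> Basis" for b unfolding l_def using that by (simp add: inner_sum_left_Basis)
  have ub: "u \<bullet> b = (z b + 1) / ?k" if "b \<in> Basis" for b unfolding u_def using that by (simp add: inner_sum_left_Basis)
  show "box l u \<subseteq> gcell m z"
  proof
    fix x assume x: "x \<in> box l u"
    show "x \<in> gcell m z" unfolding gcell_def
    proof (intro CollectI ballI)
      fix b :: 'a assume b: "b \<in> Basis"
      have "z b / ?k < x \<bullet> b" "x \<bullet> b < (z b + 1) / ?k" using x b lb ub by (auto simp: mem_box)
      then have "z b < ?k * (x \<bullet> b)" "?k * (x \<bullet> b) < z b + 1"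
        by (auto simp: field_simps)
      then show "\<lfloor>?k * (x \<bullet> b)\<rfloor> = z b" by linarith
    qed
  qed
  show "gcell m z \<subseteq> cbox l u"
  proof
    fix x assume x: "x \<in> gcell m z"
    show "x \<in> cbox l u" unfolding mem_box
    proof (intro ballI conjI)
      fix b :: 'a assume b: "b \<in> Basis"
      have "\<lfloor>?k * (x \<bullet> b)\<rfloor> = z b" using x b unfolding gcell_def by auto
      then have "z b \<le> ?k * (x \<bullet> b)" "?k * (x \<bullet> b) \<le> z b + 1" by linarith+
      have kp: "?k > 0" by simp
      show "l \<bullet> b \<le> x \<bullet> b" unfolding lb[OF b] pos_divide_le_eq[OF kp] using \<open>z b \<le> ?k * (x \<bullet> b)\<close> by (simp add: mult.commute)
      show "x \<bullet> b \<le> u \<bullet> b" unfolding ub[OF b] pos_le_divide_eq[OF kp] using \<open>?k * (x \<bullet> b) \<le> z b + 1\<close> by (simp add: mult.commute)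
    qed
  qed
qed

lemma gcell_measure:
  fixes z :: "'a::euclidean_space \<Rightarrow> int"
  shows "emeasure lebesgue (gcell m z) < \<infinity>" "(1 / real (Suc m)) ^ DIM('a) \<le> measure lebesgue (gcell m z)"
proof -
  define l where "l = (\<Sum>b\<in>Basis. (real_of_int (z b) / real (Suc m)) *\<^sub>R b :: 'a)"
  define u where "u = (\<Sum>b\<in>Basis. ((real_of_int (z b) + 1) / real (Suc m)) *\<^sub>R b :: 'a)"
  have B1: "box l u \<subseteq> gcell m z" and B2: "gcell m z \<subseteq> cbox l u"
    using gcell_box[where z=z and m=m] unfolding l_def u_def by auto
  have eq: "emeasure lebesgue (gcell m z) = emeasure lborel (gcell m z)"
    using gcell_borel[of m z] by (simp add: emeasure_completion)
  have "emeasure lborel (gcell m z) \<le> emeasure lborel (cbox l u)"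
    using B2 by (intro emeasure_mono) auto
  also have "\<dots> < \<infinity>" by (rule emeasure_lborel_cbox_finite)
  finally show fin: "emeasure lebesgue (gcell m z) < \<infinity>" using eq by simp
  have lu: "(u - l) \<bullet> b = 1 / real (Suc m)" if "b \<in> Basis" for b
    using that unfolding l_def u_def by (simp add: inner_diff_left inner_sum_left_Basis add_divide_distrib)
  have le: "\<forall>b\<in>Basis. l \<bullet> b \<le> u \<bullet> b"
  proof
    fix b :: 'a assume b: "b \<in> Basis"
    have "(u - l) \<bullet> b \<ge> 0" using lu[OF b] by simp
    then show "l \<bullet> b \<le> u \<bullet> b" by (simp add: inner_diff_left)
  qed
  have pr: "prod ((\<bullet>) (u - l)) Basis = (1 / real (Suc m)) ^ DIM('a)"
    using lu by (simp add: prod_constant)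
  have "emeasure lborel (box l u) = ennreal ((1 / real (Suc m)) ^ DIM('a))"
    unfolding emeasure_lborel_box_eq using le pr by simp
  moreover have "emeasure lborel (box l u) \<le> emeasure lborel (gcell m z)"
    by (rule emeasure_mono[OF B1]) (simp add: gcell_borel)
  ultimately have "ennreal ((1 / real (Suc m)) ^ DIM('a)) \<le> emeasure lebesgue (gcell m z)" using eq by simp
  then show "(1 / real (Suc m)) ^ DIM('a) \<le> measure lebesgue (gcell m z)"
    using fin by (simp add: emeasure_eq_ennreal_measure less_top)
qed

lemma gcell_diam:
  fixes x y :: "'a::euclidean_space"
  assumes "x \<in> gcell m z" "y \<in> gcell m z"
  shows "norm (x - y) \<le> real DIM('a) / real (Suc m)"
proof -
  let ?k = "real (Suc m)"
  have "\<bar>(x - y) \<bullet> b\<bar> \<le> 1 / ?k" if b: "b \<in> Basis" for b :: 'a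
  proof -
    have "\<lfloor>?k * (x \<bullet> b)\<rfloor> = z b" "\<lfloor>?k * (y \<bullet> b)\<rfloor> = z b" using assms b unfolding gcell_def by auto
    then have "\<bar>?k * (x \<bullet> b) - ?k * (y \<bullet> b)\<bar> \<le> 1" by linarith
    then have "?k * \<bar>(x - y) \<bullet> b\<bar> \<le> 1" by (simp add: inner_diff_left right_diff_distrib[symmetric] abs_mult)
    then show ?thesis by (simp add: field_simps)
  qed
  then have "(\<Sum>b\<in>Basis. \<bar>(x - y) \<bullet> b\<bar>) \<le> (\<Sum>b\<in>(Basis::'a set). 1 / ?k)"
    by (intro sum_mono) auto
  then show ?thesis using norm_le_l1[of "x - y"] by simp
qed

lemma floor_bounds:
  fixes t K :: real
  assumes "- K \<le> t" "t \<le> K"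
  shows "\<lfloor>t\<rfloor> \<in> {-(\<lceil>K\<rceil> + 1)..\<lceil>K\<rceil> + 1}"
proof -
  have f1: "\<lfloor>t\<rfloor> \<le> \<lfloor>K\<rfloor>" using assms(2) by (rule floor_mono)
  have f2: "\<lfloor>K\<rfloor> \<le> \<lceil>K\<rceil>" by (rule floor_le_ceiling)
  have f3: "\<lfloor>-K\<rfloor> \<le> \<lfloor>t\<rfloor>" using assms(1) by (rule floor_mono)
  have f4: "\<lfloor>-K\<rfloor> = - \<lceil>K\<rceil>" by (simp add: ceiling_def)
  show ?thesis unfolding atLeastAtMost_iff using f1 f2 f3 f4 by linarith
qed

lemma compact_frac:
  fixes f :: "nat \<Rightarrow> 'a::euclidean_space \<Rightarrow> real"
  assumes fm: "\<And>n. f n \<in> borel_measurable lebesgue" and bnd: "\<And>n x. \<bar>f n x\<bar> \<le> B"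
    and supp: "\<And>n x. f n x \<noteq> 0 \<Longrightarrow> norm x \<le> R"
    and J: "\<And>n. (\<integral>\<^sup>+x. (\<integral>\<^sup>+y. ennreal (\<bar>f n x - f n y\<bar> / norm (x - y) powr (real DIM('a) + \<alpha>)) \<partial>lebesgue) \<partial>lebesgue) \<le> ennreal C"
    and \<alpha>: "0 < \<alpha>"
  shows "\<exists>r. strict_mono r \<and> (AE x in lebesgue. convergent (\<lambda>n. f (r n) x))"
proof -
  define d where "d = real DIM('a)"
  have d1: "d \<ge> 1" unfolding d_def by (simp add: DIM_positive Suc_le_eq)
  define N where "N m = \<lceil>real (Suc m) * R\<rceil> + 1" for m
  define Z where "Z m = PiE (Basis::'a set) (\<lambda>_. {-N m..N m})" for m
  show ?thesis
  proof (rule compact_abstract[where Z=Z and Qc=gcell and \<mu>="\<lambda>m. (1 / real (Suc m)) ^ DIM('a)" and \<delta>="\<lambda>m. d / real (Suc m)", OF fm bnd J])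
    show "0 \<le> real DIM('a) + \<alpha>" using \<alpha> by simp
    show "finite (Z m)" for m unfolding Z_def by (intro finite_PiE) auto
    show "gcell m z \<in> sets lebesgue" for m z by (rule gcell_lebesgue)
    show "emeasure lebesgue (gcell m z) < \<infinity>" for m z by (rule gcell_measure(1))
    show "(1 / real (Suc m)) ^ DIM('a) \<le> measure lebesgue (gcell m z)" for m and z :: "'a \<Rightarrow> int" by (rule gcell_measure(2))
    show "0 < (1 / real (Suc m)) ^ DIM('a)" for m by simp
    show "norm (x - y) \<le> d / real (Suc m)" if "x \<in> gcell m z" "y \<in> gcell m z" for m z and x y :: 'a
      using gcell_diam[OF that] unfolding d_def .
    show "z = z'" if "z \<in> Z m" "z' \<in> Z m" "x \<in> gcell m z" "x \<in> gcell m z'" for m z z' x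
      using that unfolding Z_def gcell_def by (intro PiE_ext[of z Basis _ z']) auto
    show "\<exists>z\<in>Z m. x \<in> gcell m z" if "f n x \<noteq> 0" for m n x
    proof (intro bexI)
      let ?k = "real (Suc m)"
      have nx: "norm x \<le> R" using supp[OF that] .
      show "x \<in> gcell m (restrict (\<lambda>b. \<lfloor>?k * (x \<bullet> b)\<rfloor>) Basis)" unfolding gcell_def by auto
      have "\<lfloor>?k * (x \<bullet> b)\<rfloor> \<in> {-N m..N m}" if b: "b \<in> Basis" for b :: 'a
      proof -
        have "\<bar>x \<bullet> b\<bar> \<le> R" using Basis_le_norm[OF b, of x] nx by linarith
        then have "\<bar>?k * (x \<bullet> b)\<bar> \<le> ?k * R" by (simp add: abs_mult mult_left_mono)
        then have "- (?k * R) \<le> ?k * (x \<bullet> b)" "?k * (x \<bullet> b) \<le> ?k * R" by (auto simp: abs_le_iff)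
        then show ?thesis unfolding N_def by (rule floor_bounds)
      qed
      then show "restrict (\<lambda>b. \<lfloor>?k * (x \<bullet> b)\<rfloor>) Basis \<in> Z m" unfolding Z_def by auto
    qed
    show "(\<lambda>m. (d / real (Suc m)) powr (real DIM('a) + \<alpha>) / (1 / real (Suc m)) ^ DIM('a)) \<longlonglongrightarrow> 0"
    proof -
      have eq: "(d / real (Suc m)) powr (real DIM('a) + \<alpha>) / (1 / real (Suc m)) ^ DIM('a)
          = d powr (real DIM('a) + \<alpha>) * real (Suc m) powr (- \<alpha>)" for m
      proof -
        have k: "real (Suc m) > 0" by simp
        have "(d / real (Suc m)) powr (real DIM('a) + \<alpha>) = d powr (real DIM('a) + \<alpha>) / (real (Suc m) ^ DIM('a) * real (Suc m) powr \<alpha>)"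
          using k d1 by (simp add: powr_divide powr_add powr_realpow)
        then show ?thesis using k by (simp add: powr_minus field_simps power_one_over)
      qed
      have lim: "filterlim (\<lambda>m. real (Suc m)) at_top sequentially"
        using filterlim_compose[OF filterlim_real_sequentially filterlim_Suc] by (simp add: o_def)
      have "(\<lambda>m. d powr (real DIM('a) + \<alpha>) * real (Suc m) powr (- \<alpha>)) \<longlonglongrightarrow> d powr (real DIM('a) + \<alpha>) * 0"
        by (intro tendsto_mult tendsto_const tendsto_neg_powr lim) (use \<alpha> in simp)
      then show ?thesis unfolding eq by simp
    qed
  qed
qed

definition clean :: "int set \<Rightarrow> 'a set \<Rightarrow> ('a \<Rightarrow> real) \<Rightarrow> 'a \<Rightarrow> real" where
  "clean W \<Omega> w x = (\<Sum>v\<in>W. real_of_int v * indicator (level_set \<Omega> w v) x)"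

definition GG :: "real \<Rightarrow> int set \<Rightarrow> 'a::euclidean_space set \<Rightarrow> ('a \<Rightarrow> real) \<Rightarrow> 'a \<Rightarrow> 'a \<Rightarrow> ennreal" where
  "GG s W \<Omega> w x y = (\<Sum>v\<in>W. ennreal (real_of_int \<bar>v\<bar>) *
      ennreal (\<bar>indicator (level_set \<Omega> w v) x - indicator (level_set \<Omega> w v) y\<bar> / norm (x - y) powr s))"

definition RR :: "real \<Rightarrow> int set \<Rightarrow> 'a::euclidean_space set \<Rightarrow> ('a \<Rightarrow> real) \<Rightarrow> ennreal" where
  "RR \<alpha> W \<Omega> w = (\<Sum>v\<in>W. ennreal (real_of_int \<bar>v\<bar>) * frac_perimeter \<alpha> (level_set \<Omega> w v))"

lemma R_alpha_RR: "R_alpha \<alpha> W \<Omega> w = ennreal (1 - \<alpha>) * RR \<alpha> W \<Omega> w"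
  unfolding R_alpha_def RR_def ..

lemma level_meas:
  assumes "\<Omega> \<in> sets lebesgue" "w \<in> borel_measurable (lebesgue_on \<Omega>)"
  shows "level_set \<Omega> w v \<in> sets lebesgue"
proof -
  have "{x \<in> space (lebesgue_on \<Omega>). w x = real_of_int v} \<in> sets (lebesgue_on \<Omega>)"
    using assms(2) by measurable
  then have "{x \<in> space (lebesgue_on \<Omega>). w x = real_of_int v} \<in> sets lebesgue"
    using assms(1) by (simp add: sets_restrict_space_iff)
  moreover have "{x \<in> space (lebesgue_on \<Omega>). w x = real_of_int v} = level_set \<Omega> w v"
    unfolding level_set_def by auto
  ultimately show ?thesis by simp
qed

lemma meas_K':
  fixes f :: "'a::euclidean_space \<Rightarrow> real"
  assumes "f \<in> borel_measurable lebesgue"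
  shows "(\<lambda>z. ennreal (\<bar>f (fst z) - f (snd z)\<bar> / norm (fst z - snd z) powr s)) \<in> borel_measurable (lebesgue \<Otimes>\<^sub>M lebesgue)"
  using meas_K[OF assms, of s] by (simp add: case_prod_beta')

lemma GG_meas:
  assumes "\<And>v. level_set \<Omega> w v \<in> sets lebesgue"
  shows "(\<lambda>(x,y). GG s W \<Omega> w x y) \<in> borel_measurable (lebesgue \<Otimes>\<^sub>M (lebesgue :: 'a::euclidean_space measure))"
proof -
  have "(\<lambda>z. GG s W \<Omega> w (fst z) (snd z)) \<in> borel_measurable (lebesgue \<Otimes>\<^sub>M (lebesgue :: 'a measure))"
    unfolding GG_def
  proof (intro borel_measurable_sum borel_measurable_times_ennreal borel_measurable_const)
    fix v show "(\<lambda>z. ennreal (\<bar>indicator (level_set \<Omega> w v) (fst z) - indicator (level_set \<Omega> w v) (snd z)\<bar> / norm (fst z - snd z) powr s))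
      \<in> borel_measurable (lebesgue \<Otimes>\<^sub>M lebesgue)"
      by (rule meas_K') (use assms in measurable)
  qed
  then show ?thesis by (simp add: case_prod_beta')
qed

lemma RR_eq:
  fixes w :: "'a::euclidean_space \<Rightarrow> real"
  assumes lev: "\<And>v. level_set \<Omega> w v \<in> sets lebesgue"
  shows "RR \<alpha> W \<Omega> w = (\<integral>\<^sup>+x. (\<integral>\<^sup>+y. GG (real DIM('a) + \<alpha>) W \<Omega> w x y \<partial>lebesgue) \<partial>lebesgue)"
proof -
  define s where "s = real DIM('a) + \<alpha>"
  define F where "F v x y = ennreal (\<bar>indicator (level_set \<Omega> w v) x - indicator (level_set \<Omega> w v) y\<bar> / norm (x - y) powr s)" for v x y
  have ind: "indicator (level_set \<Omega> w v) \<in> borel_measurable lebesgue" for v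
    using lev by measurable
  have Fy: "(\<lambda>y. F v x y) \<in> borel_measurable lebesgue" for v x
    unfolding F_def by (rule meas_K_y[OF ind])
  have Fx: "(\<lambda>x. \<integral>\<^sup>+y. F v x y \<partial>lebesgue) \<in> borel_measurable lebesgue" for v
    unfolding F_def by (rule sigma_finite_measure.borel_measurable_nn_integral[OF sigma_finite_lebesgue meas_K[OF ind]])
  have inner: "(\<integral>\<^sup>+y. GG s W \<Omega> w x y \<partial>lebesgue) = (\<Sum>v\<in>W. ennreal (real_of_int \<bar>v\<bar>) * (\<integral>\<^sup>+y. F v x y \<partial>lebesgue))" for x
  proof -
    have "(\<integral>\<^sup>+y. GG s W \<Omega> w x y \<partial>lebesgue) = (\<Sum>v\<in>W. \<integral>\<^sup>+y. ennreal (real_of_int \<bar>v\<bar>) * F v x y \<partial>lebesgue)"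
      unfolding GG_def F_def[symmetric] by (rule nn_integral_sum) (use Fy in measurable)
    also have "\<dots> = (\<Sum>v\<in>W. ennreal (real_of_int \<bar>v\<bar>) * (\<integral>\<^sup>+y. F v x y \<partial>lebesgue))"
      by (intro sum.cong refl nn_integral_cmult Fy)
    finally show ?thesis .
  qed
  have "(\<integral>\<^sup>+x. (\<integral>\<^sup>+y. GG s W \<Omega> w x y \<partial>lebesgue) \<partial>lebesgue)
      = (\<integral>\<^sup>+x. (\<Sum>v\<in>W. ennreal (real_of_int \<bar>v\<bar>) * (\<integral>\<^sup>+y. F v x y \<partial>lebesgue)) \<partial>lebesgue)"
    unfolding inner ..
  also have "\<dots> = (\<Sum>v\<in>W. \<integral>\<^sup>+x. ennreal (real_of_int \<bar>v\<bar>) * (\<integral>\<^sup>+y. F v x y \<partial>lebesgue) \<partial>lebesgue)"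
    by (rule nn_integral_sum) (use Fx in measurable)
  also have "\<dots> = (\<Sum>v\<in>W. ennreal (real_of_int \<bar>v\<bar>) * (\<integral>\<^sup>+x. (\<integral>\<^sup>+y. F v x y \<partial>lebesgue) \<partial>lebesgue))"
    by (intro sum.cong refl nn_integral_cmult Fx)
  also have "\<dots> = RR \<alpha> W \<Omega> w"
    unfolding RR_def frac_perimeter_def F_def s_def ..
  finally show ?thesis unfolding s_def ..
qed

lemma clean_meas:
  assumes "\<And>v. level_set \<Omega> w v \<in> sets lebesgue"
  shows "clean W \<Omega> w \<in> borel_measurable lebesgue"
  unfolding clean_def[abs_def] using assms by measurable

lemma clean_bound: "finite W \<Longrightarrow> \<bar>clean W \<Omega> w x\<bar> \<le> (\<Sum>v\<in>W. real_of_int \<bar>v\<bar>)"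
  unfolding clean_def
  by (rule order.trans[OF sum_abs]) (intro sum_mono, auto simp: abs_mult indicator_def)

lemma clean_supp: "clean W \<Omega> w x \<noteq> 0 \<Longrightarrow> x \<in> \<Omega>"
  unfolding clean_def level_set_def by (auto simp: indicator_def split: if_splits intro: ccontr)

lemma clean_val:
  assumes "finite W" "x \<in> \<Omega>" "v0 \<in> W" "w x = real_of_int v0"
  shows "clean W \<Omega> w x = real_of_int v0"
proof -
  have "clean W \<Omega> w x = (\<Sum>v\<in>W. if v = v0 then real_of_int v0 else 0)"
    unfolding clean_def
  proof (rule sum.cong[OF refl])
    fix v assume "v \<in> W"
    show "real_of_int v * indicator (level_set \<Omega> w v) x = (if v = v0 then real_of_int v0 else 0)"
      using assms(2,4) by (auto simp: level_set_def indicator_def)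
  qed
  then show ?thesis using assms(1,3) by simp
qed

lemma clean_K:
  assumes "finite W"
  shows "ennreal (\<bar>clean W \<Omega> w x - clean W \<Omega> w y\<bar> / norm (x - y) powr s) \<le> GG s W \<Omega> w x y"
proof -
  define c where "c = norm (x - y) powr s"
  have c0: "c \<ge> 0" unfolding c_def by simp
  have "\<bar>clean W \<Omega> w x - clean W \<Omega> w y\<bar> = \<bar>\<Sum>v\<in>W. real_of_int v * (indicator (level_set \<Omega> w v) x - indicator (level_set \<Omega> w v) y)\<bar>"
    unfolding clean_def by (simp add: sum_subtractf[symmetric] right_diff_distrib)
  also have "\<dots> \<le> (\<Sum>v\<in>W. real_of_int \<bar>v\<bar> * \<bar>indicator (level_set \<Omega> w v) x - indicator (level_set \<Omega> w v) y\<bar>)"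
    by (rule order.trans[OF sum_abs]) (simp add: abs_mult)
  finally have "\<bar>clean W \<Omega> w x - clean W \<Omega> w y\<bar> / c \<le> (\<Sum>v\<in>W. real_of_int \<bar>v\<bar> * (\<bar>indicator (level_set \<Omega> w v) x - indicator (level_set \<Omega> w v) y\<bar> / c))"
    using c0 by (simp add: divide_right_mono sum_divide_distrib[symmetric])
  then have "ennreal (\<bar>clean W \<Omega> w x - clean W \<Omega> w y\<bar> / c) \<le> ennreal (\<Sum>v\<in>W. real_of_int \<bar>v\<bar> * (\<bar>indicator (level_set \<Omega> w v) x - indicator (level_set \<Omega> w v) y\<bar> / c))"
    by (rule ennreal_leI)
  also have "\<dots> = GG s W \<Omega> w x y"
  proof -
    have "ennreal (\<Sum>v\<in>W. real_of_int \<bar>v\<bar> * (\<bar>indicator (level_set \<Omega> w v) x - indicator (level_set \<Omega> w v) y\<bar> / norm (x - y) powr s))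
        = (\<Sum>v\<in>W. ennreal (real_of_int \<bar>v\<bar> * (\<bar>indicator (level_set \<Omega> w v) x - indicator (level_set \<Omega> w v) y\<bar> / norm (x - y) powr s)))"
      by (rule sum_ennreal[symmetric]) simp
    also have "\<dots> = GG s W \<Omega> w x y"
      unfolding GG_def by (intro sum.cong refl ennreal_mult) auto
    finally show ?thesis unfolding c_def .
  qed
  finally show ?thesis unfolding c_def .
qed

lemma fatou2:
  fixes G :: "nat \<Rightarrow> 'a::euclidean_space \<Rightarrow> 'a \<Rightarrow> ennreal" and G0 :: "'a \<Rightarrow> 'a \<Rightarrow> ennreal"
  assumes meas: "\<And>n. (\<lambda>(x,y). G n x y) \<in> borel_measurable (lebesgue \<Otimes>\<^sub>M lebesgue)"
    and S: "AE x in lebesgue. x \<in> S"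
    and ev: "\<And>x y. x \<in> S \<Longrightarrow> y \<in> S \<Longrightarrow> eventually (\<lambda>n. G n x y = G0 x y) sequentially"
  shows "(\<integral>\<^sup>+x. (\<integral>\<^sup>+y. G0 x y \<partial>lebesgue) \<partial>lebesgue) \<le> liminf (\<lambda>n. \<integral>\<^sup>+x. (\<integral>\<^sup>+y. G n x y \<partial>lebesgue) \<partial>lebesgue)"
proof -
  have lim_eq: "liminf (\<lambda>n. G n x y) = G0 x y" if "x \<in> S" "y \<in> S" for x y
    by (rule lim_imp_Liminf[OF trivial_limit_sequentially tendsto_eventually[OF ev[OF that]]])
  have my: "(\<lambda>y. G n x y) \<in> borel_measurable lebesgue" for n x
    using measurable_Pair2[OF meas[of n], of x] by simp
  have mx: "(\<lambda>x. \<integral>\<^sup>+y. G n x y \<partial>lebesgue) \<in> borel_measurable lebesgue" for n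
    by (rule sigma_finite_measure.borel_measurable_nn_integral[OF sigma_finite_lebesgue meas])
  have inner: "(\<integral>\<^sup>+y. G0 x y \<partial>lebesgue) \<le> liminf (\<lambda>n. \<integral>\<^sup>+y. G n x y \<partial>lebesgue)" if x: "x \<in> S" for x
  proof -
    have "(\<integral>\<^sup>+y. G0 x y \<partial>lebesgue) = (\<integral>\<^sup>+y. liminf (\<lambda>n. G n x y) \<partial>lebesgue)"
      by (rule nn_integral_cong_AE) (use S lim_eq[OF x] in \<open>auto elim!: AE_mp\<close>)
    also have "\<dots> \<le> liminf (\<lambda>n. \<integral>\<^sup>+y. G n x y \<partial>lebesgue)"
      by (rule nn_integral_liminf) (rule my)
    finally show ?thesis .
  qed
  have "(\<integral>\<^sup>+x. (\<integral>\<^sup>+y. G0 x y \<partial>lebesgue) \<partial>lebesgue) \<le> (\<integral>\<^sup>+x. liminf (\<lambda>n. \<integral>\<^sup>+y. G n x y \<partial>lebesgue) \<partial>lebesgue)"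
    by (rule nn_integral_mono_AE) (use S inner in \<open>auto elim!: AE_mp\<close>)
  also have "\<dots> \<le> liminf (\<lambda>n. \<integral>\<^sup>+x. (\<integral>\<^sup>+y. G n x y \<partial>lebesgue) \<partial>lebesgue)"
    by (rule nn_integral_liminf) (rule mx)
  finally show ?thesis .
qed

lemma int_eventually_const:
  fixes s :: "nat \<Rightarrow> real"
  assumes ints: "\<And>k. s k \<in> \<int>" and lim: "s \<longlonglongrightarrow> l"
  shows "\<exists>N. \<forall>k\<ge>N. s k = l"
proof -
  obtain N where N: "\<And>k. k \<ge> N \<Longrightarrow> \<bar>s k - l\<bar> < 1/2"
    using LIMSEQ_D[OF lim, of "1/2"] by (auto simp: dist_real_def)
  have eq: "s k = s N" if "k \<ge> N" for k
  proof -
    have "\<bar>s k - s N\<bar> < 1" using N[OF that] N[of N] by linarith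
    moreover have "s k - s N \<in> \<int>" using ints by (intro Ints_diff)
    ultimately have "s k - s N = 0"
      by (metis Ints_nonzero_abs_less1)
    then show ?thesis by simp
  qed
  have "(\<lambda>k. s (k + N)) = (\<lambda>k. s N)"
    by (intro ext eq) simp
  then have "(\<lambda>k. s (k + N)) \<longlonglongrightarrow> s N"
    by simp
  moreover have "(\<lambda>k. s (k + N)) \<longlonglongrightarrow> l"
    using lim by (rule LIMSEQ_ignore_initial_segment)
  ultimately have "l = s N" using LIMSEQ_unique by blast
  then show ?thesis using eq by metis
qed

lemma obj_fin:
  assumes "RR \<alpha> W \<Omega> v = ennreal t" "0 \<le> t" "R_alpha \<alpha> W \<Omega> wbar = ennreal \<rho>b" "0 \<le> \<rho>b" "\<alpha> \<le> 1"
  shows "trust_obj \<eta> \<alpha> W \<Omega> g wbar v = ereal (integral\<^sup>L (lebesgue_on \<Omega>) (\<lambda>x. g x * (v x - wbar x)) + \<eta> * (1 - \<alpha>) * t - \<eta> * \<rho>b)"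
proof -
  have "R_alpha \<alpha> W \<Omega> v = ennreal ((1 - \<alpha>) * t)"
    unfolding R_alpha_RR assms(1) using assms by (simp add: ennreal_mult'')
  then show ?thesis unfolding trust_obj_def using assms by (simp add: enn2ereal_ennreal)
qed

lemma obj_inf:
  assumes "RR \<alpha> W \<Omega> v = \<infinity>" "R_alpha \<alpha> W \<Omega> wbar = ennreal \<rho>b" "\<alpha> < 1" "\<eta> > 0"
  shows "trust_obj \<eta> \<alpha> W \<Omega> g wbar v = \<infinity>"
proof -
  have "R_alpha \<alpha> W \<Omega> v = \<infinity>"
    unfolding R_alpha_RR assms(1) using assms(3) by (simp add: ennreal_mult_top)
  then show ?thesis unfolding trust_obj_def using assms by (simp add: enn2ereal_ennreal)
qed

lemma AE_W_bound:
  assumes "finite W" "AE x in M. v x \<in> real_of_int ` W"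
  shows "AE x in M. \<bar>v x\<bar> \<le> (\<Sum>u\<in>W. real_of_int \<bar>u\<bar>)"
  using assms(2)
proof (rule AE_mp, intro AE_I2 impI)
  fix x assume "v x \<in> real_of_int ` W"
  then obtain u where u: "u \<in> W" "v x = real_of_int u" by blast
  have "real_of_int \<bar>u\<bar> \<le> (\<Sum>u\<in>W. real_of_int \<bar>u\<bar>)"
    by (rule member_le_sum[OF u(1)]) (auto simp: assms(1))
  then show "\<bar>v x\<bar> \<le> (\<Sum>u\<in>W. real_of_int \<bar>u\<bar>)" using u by simp
qed


theorem proposition5p3:
  fixes \<Omega> :: "'a::euclidean_space set" and W :: "int set" and \<eta> \<alpha> \<Delta> :: real
    and g wbar :: "'a \<Rightarrow> real"
  assumes "polyhedral_domain \<Omega>"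
    and "\<eta> > 0"
    and "finite W" and "W \<noteq> {}"
    and "0 < \<alpha>" and "\<alpha> < 1"
    and "in_F W \<Omega> wbar"
    and "R_alpha \<alpha> W \<Omega> wbar < \<infinity>"
    and "g \<in> borel_measurable (lebesgue_on \<Omega>)"
    and "integrable (lebesgue_on \<Omega>) (\<lambda>x. (g x)\<^sup>2)"
    and "\<Delta> \<ge> 0"
  shows "\<exists>w. trust_feasible W \<Omega> \<Delta> wbar w \<and>
           (\<forall>v. trust_feasible W \<Omega> \<Delta> wbar v \<longrightarrow>
                trust_obj \<eta> \<alpha> W \<Omega> g wbar w \<le> trust_obj \<eta> \<alpha> W \<Omega> g wbar v)"
proof -
  note dom = assms(1) and eta = assms(2) and finW = assms(3) and al0 = assms(5) and al1 = assms(6)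
    and wbF = assms(7) and Rwb = assms(8) and gm = assms(9) and g2 = assms(10) and Dl = assms(11)
  define L where "L = lebesgue_on \<Omega>"
  define Obj where "Obj = trust_obj \<eta> \<alpha> W \<Omega> g wbar"
  define Feas where "Feas = trust_feasible W \<Omega> \<Delta> wbar"
  define lin where "lin v = integral\<^sup>L L (\<lambda>x. g x * (v x - wbar x))" for v
  define M where "M = (\<Sum>u\<in>W. real_of_int \<bar>u\<bar>)"
  define s where "s = real DIM('a) + \<alpha>"
  define c where "c = \<eta> * (1 - \<alpha>)"
  have c0: "c > 0" unfolding c_def using eta al1 by simp
  have M0: "M \<ge> 0" unfolding M_def by (simp add: sum_nonneg)
  have opn: "open \<Omega>" and bdd: "bounded \<Omega>" using dom unfolding polyhedral_domain_def by auto
  have \<Omega>s: "\<Omega> \<in> sets lebesgue"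
    using borel_open[OF opn] by (simp add: sets_completionI_sets)
  have \<Omega>lm: "\<Omega> \<in> lmeasurable" by (rule bounded_set_imp_lmeasurable[OF bdd \<Omega>s])
  have finL: "finite_measure L" unfolding L_def by (rule finite_measure_lebesgue_on[OF \<Omega>lm])
  have spL: "space L = \<Omega>" unfolding L_def by simp
  obtain R where R: "\<And>x. x \<in> \<Omega> \<Longrightarrow> norm x \<le> R" using bdd unfolding bounded_iff by blast
  have \<Omega>s': "\<Omega> \<inter> space lebesgue \<in> sets lebesgue" using \<Omega>s by simp
  obtain \<rho>b where \<rho>b: "R_alpha \<alpha> W \<Omega> wbar = ennreal \<rho>b" "0 \<le> \<rho>b"
    using Rwb by (cases "R_alpha \<alpha> W \<Omega> wbar") auto
  have gint: "integrable L g"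
  proof (rule Bochner_Integration.integrable_bound[where f="\<lambda>x. 1 + (g x)\<^sup>2"])
    show "integrable L (\<lambda>x. 1 + (g x)\<^sup>2)"
      using g2 finite_measure.integrable_const[OF finL] unfolding L_def by (intro Bochner_Integration.integrable_add) auto
    show "g \<in> borel_measurable L" using gm unfolding L_def .
    show "AE x in L. norm (g x) \<le> norm (1 + (g x)\<^sup>2)"
    proof (intro AE_I2)
      fix x
      have "\<bar>g x\<bar> \<le> 1 + (g x)\<^sup>2"
      proof (cases "\<bar>g x\<bar> \<le> 1")
        case True then show ?thesis by (simp add: add_increasing2)
      next
        case False
        then have "\<bar>g x\<bar> * 1 \<le> \<bar>g x\<bar> * \<bar>g x\<bar>" by (intro mult_left_mono) auto
        then have "\<bar>g x\<bar> \<le> g x * g x" by (simp add: abs_mult_self_eq)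
        then show ?thesis by (simp add: power2_eq_square)
      qed
      then show "norm (g x) \<le> norm (1 + (g x)\<^sup>2)" by simp
    qed
  qed
  define \<Lambda> where "\<Lambda> = 2 * M * (\<integral>x. \<bar>g x\<bar> \<partial>L)"
  have wbm: "wbar \<in> borel_measurable L" using wbF unfolding in_F_def L_def by auto
  have wbW: "AE x in L. wbar x \<in> real_of_int ` W" using wbF unfolding in_F_def L_def by auto
  have wbB: "AE x in L. \<bar>wbar x\<bar> \<le> M" unfolding M_def by (rule AE_W_bound[OF finW wbW])
  have linint: "integrable L (\<lambda>x. g x * (v x - wbar x))"
    if vm: "v \<in> borel_measurable L" and vW: "AE x in L. v x \<in> real_of_int ` W" for v
  proof (rule Bochner_Integration.integrable_bound[where f="\<lambda>x. 2 * M * \<bar>g x\<bar>"])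
    show "integrable L (\<lambda>x. 2 * M * \<bar>g x\<bar>)" using gint by auto
    show "(\<lambda>x. g x * (v x - wbar x)) \<in> borel_measurable L" using vm wbm gm unfolding L_def by measurable
    have vB: "AE x in L. \<bar>v x\<bar> \<le> M" unfolding M_def by (rule AE_W_bound[OF finW vW])
    show "AE x in L. norm (g x * (v x - wbar x)) \<le> norm (2 * M * \<bar>g x\<bar>)"
      using vB wbB
    proof (eventually_elim)
      case (elim x)
      have "\<bar>v x - wbar x\<bar> \<le> 2 * M" using elim by linarith
      then have "\<bar>g x\<bar> * \<bar>v x - wbar x\<bar> \<le> \<bar>g x\<bar> * (2 * M)" by (intro mult_left_mono) auto
      then show ?case using M0 by (simp add: abs_mult mult_ac)
    qed
  qed
  have linbnd: "\<bar>lin v\<bar> \<le> \<Lambda>"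
    if vm: "v \<in> borel_measurable L" and vW: "AE x in L. v x \<in> real_of_int ` W" for v
  proof -
    have vB: "AE x in L. \<bar>v x\<bar> \<le> M" unfolding M_def by (rule AE_W_bound[OF finW vW])
    have "\<bar>lin v\<bar> \<le> (\<integral>x. \<bar>g x * (v x - wbar x)\<bar> \<partial>L)" unfolding lin_def by (rule integral_abs_bound)
    also have "\<dots> \<le> (\<integral>x. 2 * M * \<bar>g x\<bar> \<partial>L)"
    proof (rule integral_mono_AE)
      show "integrable L (\<lambda>x. \<bar>g x * (v x - wbar x)\<bar>)" using linint[OF vm vW] by auto
      show "integrable L (\<lambda>x. 2 * M * \<bar>g x\<bar>)" using gint by auto
      show "AE x in L. \<bar>g x * (v x - wbar x)\<bar> \<le> 2 * M * \<bar>g x\<bar>"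
        using vB wbB
      proof (eventually_elim)
        case (elim x)
        have "\<bar>v x - wbar x\<bar> \<le> 2 * M" using elim by linarith
        then have "\<bar>g x\<bar> * \<bar>v x - wbar x\<bar> \<le> \<bar>g x\<bar> * (2 * M)" by (intro mult_left_mono) auto
        then show ?case by (simp add: abs_mult mult_ac)
      qed
    qed
    also have "\<dots> = \<Lambda>" unfolding \<Lambda>_def by simp
    finally show ?thesis .
  qed
  have feasD: "v \<in> borel_measurable L" "AE x in L. v x \<in> real_of_int ` W"
      "integral\<^sup>L L (\<lambda>x. \<bar>v x - wbar x\<bar>) \<le> \<Delta>" "integrable L v" if "Feas v" for v
    using that unfolding Feas_def trust_feasible_def L_def by auto
  have objfin: "Obj v = ereal (lin v + c * t - \<eta> * \<rho>b)" if "RR \<alpha> W \<Omega> v = ennreal t" "0 \<le> t" for v t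
    unfolding Obj_def lin_def c_def L_def using obj_fin[OF that \<rho>b] al1 by (simp add: mult.assoc)
  have objinf: "Obj v = \<infinity>" if "RR \<alpha> W \<Omega> v = \<infinity>" for v
    unfolding Obj_def using obj_inf[OF that \<rho>b(1) al1 eta] .
  have objlow: "ereal (- \<Lambda> - \<eta> * \<rho>b) \<le> Obj v" if "Feas v" for v
  proof (cases "RR \<alpha> W \<Omega> v")
    case (real t)
    have "\<bar>lin v\<bar> \<le> \<Lambda>" using linbnd feasD[OF that] by blast
    moreover have "0 \<le> c * t" using c0 real(1) by simp
    ultimately show ?thesis using objfin[OF real(2) real(1)] by (simp add: abs_le_iff)
  next
    case top then show ?thesis using objinf by simp
  qed
  have wbFeas: "Feas wbar" unfolding Feas_def trust_feasible_def using wbF Dl unfolding in_F_def by simp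
  have Obj_wb: "Obj wbar = 0"
    unfolding Obj_def trust_obj_def using \<rho>b by (simp add: enn2ereal_ennreal)
  define I where "I = (INF v\<in>{v. Feas v}. Obj v)"
  have Ilow: "ereal (- \<Lambda> - \<eta> * \<rho>b) \<le> I" unfolding I_def by (rule INF_greatest) (use objlow in auto)
  have Iup: "I \<le> 0" unfolding I_def using wbFeas Obj_wb by (metis INF_lower mem_Collect_eq)
  obtain i where i: "I = ereal i" using Ilow Iup by (cases I) auto
  have Ile: "I \<le> Obj v" if "Feas v" for v unfolding I_def using that by (auto intro: INF_lower)
  have "\<exists>v. Feas v \<and> Obj v < ereal (i + inverse (real (Suc n)))" for n
  proof -
    have "I < ereal (i + inverse (real (Suc n)))" using i by simp
    then show ?thesis unfolding I_def by (auto simp: INF_less_iff)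
  qed
  then obtain w where wF: "\<And>n. Feas (w n)" and wO: "\<And>n. Obj (w n) < ereal (i + inverse (real (Suc n)))"
    by metis
  have RRfin: "RR \<alpha> W \<Omega> (w n) \<noteq> \<infinity>" for n using wO[of n] objinf[of "w n"] by auto
  define t where "t n = enn2real (RR \<alpha> W \<Omega> (w n))" for n
  have t: "RR \<alpha> W \<Omega> (w n) = ennreal (t n)" "0 \<le> t n" for n
    using RRfin[of n] unfolding t_def by (cases "RR \<alpha> W \<Omega> (w n)"; simp)+
  have linw: "lin (w n) + c * t n - \<eta> * \<rho>b < i + inverse (real (Suc n))" for n
    using wO[of n] objfin[OF t(1) t(2), of n] by simp
  define C where "C = (i + 1 + \<Lambda> + \<eta> * \<rho>b) / c"
  have tC: "t n \<le> C" for n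
  proof -
    have "\<bar>lin (w n)\<bar> \<le> \<Lambda>" using linbnd feasD[OF wF[of n]] by blast
    moreover have "inverse (real (Suc n)) \<le> 1" by (rule inverse_le_1_iff[THEN iffD2]) simp
    ultimately have "c * t n \<le> i + 1 + \<Lambda> + \<eta> * \<rho>b" using linw[of n] by linarith
    then show ?thesis unfolding C_def using c0 by (simp add: field_simps)
  qed
  have levw: "level_set \<Omega> (w n) u \<in> sets lebesgue" for n u
    using level_meas[OF \<Omega>s] feasD(1)[OF wF[of n]] unfolding L_def by blast
  define f where "f n = clean W \<Omega> (w n)" for n
  have fm: "f n \<in> borel_measurable lebesgue" for n unfolding f_def by (rule clean_meas[OF levw])
  have fb: "\<bar>f n x\<bar> \<le> M" for n x unfolding f_def M_def by (rule clean_bound[OF finW])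
  have fs: "norm x \<le> R" if "f n x \<noteq> 0" for n x by (rule R[OF clean_supp[OF that[unfolded f_def]]])
  have fJ: "(\<integral>\<^sup>+x. (\<integral>\<^sup>+y. ennreal (\<bar>f n x - f n y\<bar> / norm (x - y) powr (real DIM('a) + \<alpha>)) \<partial>lebesgue) \<partial>lebesgue) \<le> ennreal C" for n
  proof -
    have "(\<integral>\<^sup>+x. (\<integral>\<^sup>+y. ennreal (\<bar>f n x - f n y\<bar> / norm (x - y) powr (real DIM('a) + \<alpha>)) \<partial>lebesgue) \<partial>lebesgue)
        \<le> (\<integral>\<^sup>+x. (\<integral>\<^sup>+y. GG (real DIM('a) + \<alpha>) W \<Omega> (w n) x y \<partial>lebesgue) \<partial>lebesgue)"
      unfolding f_def by (intro nn_integral_mono clean_K[OF finW])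
    also have "\<dots> = RR \<alpha> W \<Omega> (w n)" by (rule RR_eq[symmetric, OF levw])
    also have "\<dots> \<le> ennreal C" using t tC by (simp add: ennreal_leI)
    finally show ?thesis .
  qed
  have "\<exists>r. strict_mono r \<and> (AE x in lebesgue. convergent (\<lambda>k. f (r k) x))"
  proof (rule compact_frac[where f=f and B=M and R=R and C=C and \<alpha>=\<alpha>])
    show "f n \<in> borel_measurable lebesgue" for n by (rule fm)
    show "\<bar>f n x\<bar> \<le> M" for n x by (rule fb)
    show "norm x \<le> R" if "f n x \<noteq> 0" for n x using that by (rule fs)
    show "(\<integral>\<^sup>+x. (\<integral>\<^sup>+y. ennreal (\<bar>f n x - f n y\<bar> / norm (x - y) powr (real DIM('a) + \<alpha>)) \<partial>lebesgue) \<partial>lebesgue) \<le> ennreal C" for n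
      by (rule fJ)
  qed (rule al0)
  then obtain r where r: "strict_mono r" and rAE: "AE x in lebesgue. convergent (\<lambda>k. f (r k) x)"
    by blast
  define wl where "wl x = lim (\<lambda>k. f (r k) x)" for x
  define S where "S = {x. convergent (\<lambda>k. f (r k) x) \<and> (x \<in> \<Omega> \<longrightarrow> (\<forall>n. w n x \<in> real_of_int ` W))}"
  have AEwW: "AE x in lebesgue. x \<in> \<Omega> \<longrightarrow> (\<forall>n. w n x \<in> real_of_int ` W)"
  proof -
    have "AE x in L. \<forall>n. w n x \<in> real_of_int ` W"
      using feasD(2)[OF wF] by (simp add: AE_all_countable)
    then show ?thesis unfolding L_def using AE_restrict_space_iff[OF \<Omega>s'] by simp
  qed
  have AES: "AE x in lebesgue. x \<in> S" using rAE AEwW unfolding S_def by eventually_elim auto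
  have EV: "(\<exists>N. \<forall>k\<ge>N. w (r k) x = wl x) \<and> wl x \<in> real_of_int ` W" if xS: "x \<in> S" and x\<Omega>: "x \<in> \<Omega>" for x
  proof -
    have wW: "w n x \<in> real_of_int ` W" for n using xS x\<Omega> unfolding S_def by auto
    have fw: "f n x = w n x" for n
    proof -
      obtain u where "u \<in> W" "w n x = real_of_int u" using wW[of n] by blast
      then show ?thesis unfolding f_def using clean_val[OF finW x\<Omega>] by simp
    qed
    have conv: "(\<lambda>k. f (r k) x) \<longlonglongrightarrow> wl x" using xS unfolding S_def wl_def by (simp add: convergent_LIMSEQ_iff)
    have ints: "f (r k) x \<in> \<int>" for k using wW[of "r k"] fw[of "r k"] by auto
    obtain N where N: "\<And>k. k \<ge> N \<Longrightarrow> f (r k) x = wl x" using int_eventually_const[OF ints conv] by blast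
    have "wl x \<in> real_of_int ` W" using N[of N] fw[of "r N"] wW[of "r N"] by simp
    then show ?thesis using N fw by auto
  qed
  have wlm: "wl \<in> borel_measurable lebesgue" unfolding wl_def by (rule borel_measurable_lim_metric) (rule fm)
  have wlmL: "wl \<in> borel_measurable L" unfolding L_def by (rule measurable_restrict_space1[OF wlm])
  have AEL: "AE x in L. x \<in> S" unfolding L_def using AES by (rule AE_restrict_space_iff[OF \<Omega>s', THEN iffD2, OF AE_mp]) auto
  have wlW: "AE x in L. wl x \<in> real_of_int ` W"
  proof -
    have "AE x in L. x \<in> \<Omega>" unfolding L_def by (rule AE_restrict_space_iff[OF \<Omega>s', THEN iffD2]) simp
    with AEL show ?thesis by eventually_elim (use EV in blast)
  qed
  have wlB: "AE x in L. \<bar>wl x\<bar> \<le> M" unfolding M_def by (rule AE_W_bound[OF finW wlW])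
  have wlint: "integrable L wl"
  proof (rule Bochner_Integration.integrable_bound[where f="\<lambda>x. M"])
    show "integrable L (\<lambda>x. M)" using finite_measure.integrable_const[OF finL] .
    show "wl \<in> borel_measurable L" by (rule wlmL)
    show "AE x in L. norm (wl x) \<le> norm M" using wlB by eventually_elim (use M0 in auto)
  qed
  have wconv: "AE x in L. (\<lambda>k. w (r k) x) \<longlonglongrightarrow> wl x"
  proof -
    have "AE x in L. x \<in> \<Omega>" unfolding L_def by (rule AE_restrict_space_iff[OF \<Omega>s', THEN iffD2]) simp
    with AEL show ?thesis
    proof eventually_elim
      case (elim x)
      obtain N where "\<forall>k\<ge>N. w (r k) x = wl x" using EV elim by blast
      then show ?case by (intro tendsto_eventually) (auto simp: eventually_sequentially)
    qed
  qed
  have wrB: "AE x in L. \<bar>w (r k) x\<bar> \<le> M" for k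
    unfolding M_def by (rule AE_W_bound[OF finW feasD(2)[OF wF]])
  have distlim: "(\<lambda>k. integral\<^sup>L L (\<lambda>x. \<bar>w (r k) x - wbar x\<bar>)) \<longlonglongrightarrow> integral\<^sup>L L (\<lambda>x. \<bar>wl x - wbar x\<bar>)"
  proof (rule integral_dominated_convergence[where w="\<lambda>x. 2 * M"])
    show "(\<lambda>x. \<bar>wl x - wbar x\<bar>) \<in> borel_measurable L" using wlmL wbm by measurable
    show "(\<lambda>x. \<bar>w (r k) x - wbar x\<bar>) \<in> borel_measurable L" for k using feasD(1)[OF wF] wbm by measurable
    show "integrable L (\<lambda>x. 2 * M)" using finite_measure.integrable_const[OF finL] .
    show "AE x in L. (\<lambda>k. \<bar>w (r k) x - wbar x\<bar>) \<longlonglongrightarrow> \<bar>wl x - wbar x\<bar>"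
      using wconv by eventually_elim (intro tendsto_intros)
    show "AE x in L. norm \<bar>w (r k) x - wbar x\<bar> \<le> 2 * M" for k
      using wrB[of k] wbB by eventually_elim auto
  qed
  have wlFeas: "Feas wl"
  proof -
    have "integral\<^sup>L L (\<lambda>x. \<bar>wl x - wbar x\<bar>) \<le> \<Delta>"
      by (rule LIMSEQ_le_const2[OF distlim]) (use feasD(3)[OF wF] in auto)
    then show ?thesis unfolding Feas_def trust_feasible_def using wlint wlW unfolding L_def by auto
  qed
  have linlim: "(\<lambda>k. lin (w (r k))) \<longlonglongrightarrow> lin wl"
    unfolding lin_def
  proof (rule integral_dominated_convergence[where w="\<lambda>x. 2 * M * \<bar>g x\<bar>"])
    show "(\<lambda>x. g x * (wl x - wbar x)) \<in> borel_measurable L" using wlmL wbm gm unfolding L_def by measurable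
    show "(\<lambda>x. g x * (w (r k) x - wbar x)) \<in> borel_measurable L" for k using feasD(1)[OF wF] wbm gm unfolding L_def by measurable
    show "integrable L (\<lambda>x. 2 * M * \<bar>g x\<bar>)" using gint by auto
    show "AE x in L. (\<lambda>k. g x * (w (r k) x - wbar x)) \<longlonglongrightarrow> g x * (wl x - wbar x)"
      using wconv by eventually_elim (intro tendsto_intros)
    show "AE x in L. norm (g x * (w (r k) x - wbar x)) \<le> 2 * M * \<bar>g x\<bar>" for k
      using wrB[of k] wbB
    proof eventually_elim
      case (elim x)
      have "\<bar>w (r k) x - wbar x\<bar> \<le> 2 * M" using elim by linarith
      then have "\<bar>g x\<bar> * \<bar>w (r k) x - wbar x\<bar> \<le> \<bar>g x\<bar> * (2 * M)" by (intro mult_left_mono) auto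
      then show ?case by (simp add: abs_mult mult_ac)
    qed
  qed
  have levwl: "level_set \<Omega> wl u \<in> sets lebesgue" for u
    using level_meas[OF \<Omega>s wlmL[unfolded L_def]] by blast
  have evlev: "eventually (\<lambda>k. \<forall>u. (x \<in> level_set \<Omega> (w (r k)) u) = (x \<in> level_set \<Omega> wl u)) sequentially"
    if xS: "x \<in> S" for x
  proof (cases "x \<in> \<Omega>")
    case True
    obtain N where "\<forall>k\<ge>N. w (r k) x = wl x" using EV[OF xS True] by blast
    then have "\<forall>k\<ge>N. \<forall>u. (x \<in> level_set \<Omega> (w (r k)) u) = (x \<in> level_set \<Omega> wl u)"
      unfolding level_set_def by simp
    then show ?thesis unfolding eventually_sequentially by blast
  next
    case False then show ?thesis unfolding level_set_def by simp
  qed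
  have RRlsc: "RR \<alpha> W \<Omega> wl \<le> liminf (\<lambda>k. RR \<alpha> W \<Omega> (w (r k)))"
  proof -
    have "(\<integral>\<^sup>+x. (\<integral>\<^sup>+y. GG s W \<Omega> wl x y \<partial>lebesgue) \<partial>lebesgue) \<le> liminf (\<lambda>k. \<integral>\<^sup>+x. (\<integral>\<^sup>+y. GG s W \<Omega> (w (r k)) x y \<partial>lebesgue) \<partial>lebesgue)"
    proof (rule fatou2[OF _ AES])
      show "(\<lambda>(x, y). GG s W \<Omega> (w (r k)) x y) \<in> borel_measurable (lebesgue \<Otimes>\<^sub>M lebesgue)" for k
        by (rule GG_meas[OF levw])
      show "eventually (\<lambda>k. GG s W \<Omega> (w (r k)) x y = GG s W \<Omega> wl x y) sequentially" if "x \<in> S" "y \<in> S" for x y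
        using evlev[OF that(1)] evlev[OF that(2)]
        by eventually_elim (simp add: GG_def indicator_def)
    qed
    then show ?thesis unfolding s_def RR_eq[OF levw, symmetric] RR_eq[OF levwl, symmetric] .
  qed
  have claim: "lin wl + c * y - \<eta> * \<rho>b \<le> i" if y: "y \<le> 0 \<or> ennreal y < RR \<alpha> W \<Omega> wl" for y
  proof (rule field_le_epsilon)
    fix e :: real assume e: "e > 0"
    define \<epsilon> where "\<epsilon> = e / 2"
    have \<epsilon>0: "\<epsilon> > 0" unfolding \<epsilon>_def using e by simp
    have E1: "eventually (\<lambda>k. lin wl - \<epsilon> < lin (w (r k))) sequentially"
      using linlim \<epsilon>0 by (intro order_tendstoD(1)) auto
    have E2: "eventually (\<lambda>k. y \<le> t (r k)) sequentially"
      using y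
    proof
      assume "y \<le> 0" then show ?thesis using t(2) by (intro always_eventually) (auto intro: order.trans)
    next
      assume "ennreal y < RR \<alpha> W \<Omega> wl"
      then have "ennreal y < liminf (\<lambda>k. RR \<alpha> W \<Omega> (w (r k)))" using RRlsc by (rule order.strict_trans2)
      then have "eventually (\<lambda>k. ennreal y < RR \<alpha> W \<Omega> (w (r k))) sequentially" by (rule less_LiminfD)
      then show ?thesis
      proof eventually_elim
        case (elim k)
        show ?case
        proof (cases "y \<le> 0")
          case True then show ?thesis using t(2)[of "r k"] by linarith
        next
          case False
          from elim have "ennreal y < ennreal (t (r k))" unfolding t(1) .
          then show ?thesis using False by (subst (asm) ennreal_less_iff) auto
        qed
      qed
    qed
    have E3: "eventually (\<lambda>k. inverse (real (Suc (r k))) < \<epsilon>) sequentially"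
    proof -
      have "(\<lambda>k. inverse (real (Suc (r k)))) \<longlonglongrightarrow> 0"
        using LIMSEQ_subseq_LIMSEQ[OF LIMSEQ_inverse_real_of_nat r] by (simp add: o_def)
      then show ?thesis using \<epsilon>0 by (intro order_tendstoD(2)) auto
    qed
    from E1 E2 E3 have "eventually (\<lambda>k. lin wl - \<epsilon> < lin (w (r k)) \<and> y \<le> t (r k) \<and> inverse (real (Suc (r k))) < \<epsilon>) sequentially"
      by eventually_elim auto
    then obtain k where k: "lin wl - \<epsilon> < lin (w (r k))" "y \<le> t (r k)" "inverse (real (Suc (r k))) < \<epsilon>"
      unfolding eventually_sequentially by blast
    have "c * y \<le> c * t (r k)" using k(2) c0 by simp
    then show "lin wl + c * y - \<eta> * \<rho>b \<le> i + e"
      using linw[of "r k"] k(1,3) unfolding \<epsilon>_def by linarith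
  qed
  have RRwl: "RR \<alpha> W \<Omega> wl \<noteq> \<infinity>"
  proof
    assume inf: "RR \<alpha> W \<Omega> wl = \<infinity>"
    define y where "y = (i - lin wl + \<eta> * \<rho>b) / c + 1"
    have "lin wl + c * y - \<eta> * \<rho>b \<le> i" by (rule claim) (use inf in auto)
    moreover have "lin wl + c * y - \<eta> * \<rho>b = i + c" unfolding y_def using c0 by (simp add: field_simps)
    ultimately show False using c0 by simp
  qed
  then obtain tl where tl: "RR \<alpha> W \<Omega> wl = ennreal tl" "0 \<le> tl" by (cases "RR \<alpha> W \<Omega> wl") auto
  have "lin wl + c * tl - \<eta> * \<rho>b \<le> i"
  proof (rule field_le_epsilon)
    fix e :: real assume e: "e > 0"
    define y where "y = tl - e / c"
    have "y < tl" unfolding y_def using e c0 by simp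
    then have "y \<le> 0 \<or> ennreal y < RR \<alpha> W \<Omega> wl"
    proof (cases "y \<le> 0")
      case False
      then have "ennreal y < ennreal tl" using \<open>y < tl\<close> by (subst ennreal_less_iff) auto
      then show ?thesis using tl(1) by simp
    qed simp
    then have "lin wl + c * y - \<eta> * \<rho>b \<le> i" by (rule claim)
    moreover have "c * y = c * tl - e" unfolding y_def using c0 by (simp add: field_simps)
    ultimately show "lin wl + c * tl - \<eta> * \<rho>b \<le> i + e" by linarith
  qed
  then have "Obj wl \<le> I" unfolding objfin[OF tl] i by simp
  then show ?thesis using wlFeas Ile unfolding Feas_def Obj_def by (meson order.trans)
qed

end
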